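(* In the setting described in the context, for every $k\ge0$ and $\mathbf v\in\mathbb{R}^M$, $$h_k(\mathbf v)=\sum_{\alpha_1,\dots,\alpha_k}\lambda_{\alpha_1}\cdots\lambda_{\alpha_k}\int_{[-\pi,\pi]^k}\rho(\theta_1)\cdots\rho(\theta_k)\,\mathrm{d}\theta_1\cdots\mathrm{d}\theta_k\int_{\mathbb{R}^M}h_{0,U_k(\underline\alpha,\underline\theta)}\Big(\Gamma_k(\underline\alpha,\underline\theta)V_k^T(\underline\alpha,\underline\theta)\mathbf v+\big(I_M-\Gamma_k^2(\underline\alpha,\underline\theta)\big)^{1/2}\mathbf w\Big)e^{-\pi|\mathbf w|^2}\,\mathrm{d}\mathbf w,$$ where $h_{0,U}(\mathbf x):=h_0(U\mathbf x)$.
   Context: Let $M,N$ be positive integers, $\lambda_S,\lambda_R,\mu>0$, and $\rho$ a probability density on $[-\pi,\pi]$. Coordinates of $\mathbf z=(\mathbf v,\mathbf w)\in\mathbb{R}^M\times\mathbb{R}^N$ are indexed $1,\dots,M+N$. For a pair $\alpha=(i,j)$, $1\le i<j\le M+N$, and $\theta\in[-\pi,\pi]$, $r_\alpha(\theta)$ is the rotation of $\mathbb{R}^{M+N}$ in the $(i,j)$ coordinate plane such that $r_\alpha(\theta)^{-1}\mathbf z$ has $i$-th coordinate $z_i\cos\theta-z_j\sin\theta$, $j$-th coordinate $z_i\sin\theta+z_j\cos\theta$, other coordinates unchanged. Let $\Lambda=\lambda_SM/2+\lambda_RN/2+\mu M$ and set $\lambda_{(i,j)}=\lambda_S/(\Lambda(M-1))$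 if $1\le i<j\le M$, $\lambda_{(i,j)}=\lambda_R/(\Lambda(N-1))$ if $M+1\le i<j\le M+N$, and $\lambda_{(i,j)}=\mu/(\Lambda N)$ if $1\le i\le M<j\le M+N$ (so $\sum_\alpha\lambda_\alpha=1$). Let $h_0$ be a nonnegative function on $\mathbb{R}^M$ such that $h_0(\mathbf v)e^{-\pi|\mathbf v|^2}$ is a probability density, and let $P(\mathbf v,\mathbf w)=\mathbf v$. Define $$h_k(\mathbf v)=\sum_{\alpha_1,\dots,\alpha_k}\lambda_{\alpha_1}\cdots\lambda_{\alpha_k}\int_{[-\pi,\pi]^k}\rho(\theta_1)\cdots\rho(\theta_k)\,\mathrm{d}\underline\theta\int_{\mathbb{R}^N}(h_0\circ P)\Big(\big[\textstyle\prod_{l=1}^kr_{\alpha_l}(\theta_l)\big]^{-1}(\mathbf v,\mathbf w)\Big)e^{-\pi|\mathbf w|^2}\,\mathrm{d}\mathbf w,$$ the sums running over all pairs. Write $\big[\prod_{l=1}^kr_{\alpha_l}(\theta_l)\big]^{-1}=\begin{pmatrix}A_k&B_k\\C_k&D_k\end{pmatrix}$ with $A_k=A_k(\underline\alpha,\underline\theta)\in\mathbb{R}^{M\times M}$, $B_k\in\mathbb{R}^{M\times N}$, and let $A_k=U_k\Gamma_kV_k^T$ be a singular value decomposition with $U_k,V_k$ orthogonal $M\times M$ matrices and $\Gamma_k=\mathrm{diag}(\gamma_{k,1},\dots,\gamma_{k,M})$, $\gamma_{k,j}\in[0,1]$ (all depending on $\underline\alpha=(\alpha_1,\dots,\alpha_k)$,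 $\underline\theta=(\theta_1,\dots,\theta_k)$). *)

theory Defs
  imports "HOL-Probability.Probability"
begin

text \<open>Conventions: coordinates of R^(M+N) are indexed 0,...,M+N-1 (0-based), vectors are
  functions nat => real; the first M coordinates form v, the last N form w.\<close>

definition pairs :: "nat \<Rightarrow> nat \<Rightarrow> (nat \<times> nat) set" where
  "pairs M N = {(i, j). i < j \<and> j < M + N}"

definition Lam :: "nat \<Rightarrow> nat \<Rightarrow> real \<Rightarrow> real \<Rightarrow> real \<Rightarrow> real" where
  "Lam M N lS lR mu = lS * real M / 2 + lR * real N / 2 + mu * real M"

definition lam :: "nat \<Rightarrow> nat \<Rightarrow> real \<Rightarrow> real \<Rightarrow> real \<Rightarrow> nat \<times> nat \<Rightarrow> real" where
  "lam M N lS lR mu \<alpha> = (case \<alpha> of (i, j) \<Rightarrow>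
     if j < M then lS / (Lam M N lS lR mu * (real M - 1))
     else if M \<le> i then lR / (Lam M N lS lR mu * (real N - 1))
     else mu / (Lam M N lS lR mu * real N))"

definition rot_inv :: "nat \<times> nat \<Rightarrow> real \<Rightarrow> (nat \<Rightarrow> real) \<Rightarrow> (nat \<Rightarrow> real)" where
  "rot_inv \<alpha> \<theta> z = (case \<alpha> of (i, j) \<Rightarrow>
     z(i := z i * cos \<theta> - z j * sin \<theta>, j := z i * sin \<theta> + z j * cos \<theta>))"

text \<open>[r_{a_1}(th_1) ... r_{a_k}(th_k)]^{-1} z = r_{a_k}^{-1}( ... r_{a_1}^{-1} z), with
  alpha_{l+1} = as ! l and theta_{l+1} = th l.\<close>
definition comp_rot_inv :: "(nat \<times> nat) list \<Rightarrow> (nat \<Rightarrow> real) \<Rightarrow> (nat \<Rightarrow> real) \<Rightarrow> (nat \<Rightarrow> real)" where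
  "comp_rot_inv as th z = fold (\<lambda>l z. rot_inv (as ! l) (th l) z) [0..<length as] z"

text \<open>Entry (p,q) of the matrix of comp_rot_inv; for p,q < M this is the block A_k.\<close>
definition A_blk :: "(nat \<times> nat) list \<Rightarrow> (nat \<Rightarrow> real) \<Rightarrow> nat \<Rightarrow> nat \<Rightarrow> real" where
  "A_blk as th p q = comp_rot_inv as th (\<lambda>r. if r = q then 1 else 0) p"

definition join_vw :: "nat \<Rightarrow> (nat \<Rightarrow> real) \<Rightarrow> (nat \<Rightarrow> real) \<Rightarrow> (nat \<Rightarrow> real)" where
  "join_vw M v w = (\<lambda>i. if i < M then v i else w (i - M))"

definition seqs :: "nat \<Rightarrow> nat \<Rightarrow> nat \<Rightarrow> (nat \<times> nat) list set" where
  "seqs M N k = {as. length as = k \<and> set as \<subseteq> pairs M N}"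

definition hk :: "nat \<Rightarrow> nat \<Rightarrow> real \<Rightarrow> real \<Rightarrow> real \<Rightarrow> (real \<Rightarrow> real)
    \<Rightarrow> ((nat \<Rightarrow> real) \<Rightarrow> real) \<Rightarrow> nat \<Rightarrow> (nat \<Rightarrow> real) \<Rightarrow> ennreal" where
  "hk M N lS lR mu rho h0 k v =
    (\<Sum>as\<in>seqs M N k.
       ennreal (\<Prod>l<k. lam M N lS lR mu (as ! l)) *
       (\<integral>\<^sup>+ th. ennreal (\<Prod>l<k. indicator {-pi..pi} (th l) * rho (th l)) *
          (\<integral>\<^sup>+ w. ennreal (h0 (restrict (comp_rot_inv as th (join_vw M v w)) {..<M})
                  * exp (- pi * (\<Sum>i<N. (w i)\<^sup>2)))
            \<partial>(PiM {..<N} (\<lambda>_. lborel)))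
        \<partial>(PiM {..<k} (\<lambda>_. lborel))))"

definition h0U :: "nat \<Rightarrow> ((nat \<Rightarrow> real) \<Rightarrow> real) \<Rightarrow> (nat \<Rightarrow> nat \<Rightarrow> real) \<Rightarrow> (nat \<Rightarrow> real) \<Rightarrow> real" where
  "h0U M h0 U x = h0 (restrict (\<lambda>p. \<Sum>q<M. U p q * x q) {..<M})"

end

theory Submission
  imports Defs "Jordan_Normal_Form.Determinant"
begin

definition gdens :: "real \<Rightarrow> ennreal" where "gdens x = ennreal (exp (- pi * x\<^sup>2))"
definition gauss :: "real measure" where "gauss = density lborel gdens"

lemma gdens_measurable[measurable]: "gdens \<in> borel_measurable borel"
  unfolding gdens_def by measurable

lemma gdens_eq: "gdens = (\<lambda>x. ennreal (normal_density 0 (1 / sqrt (2*pi)) x))"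
proof
  fix x
  have "2 * pi * (1 / sqrt (2 * pi))\<^sup>2 = 1" by (simp add: power_divide)
  moreover have "- x\<^sup>2 / (2 * (1 / sqrt (2 * pi))\<^sup>2) = - pi * x\<^sup>2"
    by (simp add: power_divide)
  ultimately show "gdens x = ennreal (normal_density 0 (1 / sqrt (2*pi)) x)"
    unfolding gdens_def normal_density_def by simp
qed

lemma prob_space_gauss: "prob_space gauss"
  unfolding gauss_def gdens_eq by (rule prob_space_normal_density) simp

lemma sets_gauss[simp, measurable_cong]: "sets gauss = sets borel"
  by (simp add: gauss_def)
lemma space_gauss[simp]: "space gauss = UNIV"
  by (simp add: gauss_def)

lemma shear_x:
  fixes g :: "real \<Rightarrow> real \<Rightarrow> ennreal"
  assumes g[measurable]: "case_prod g \<in> borel_measurable (lborel \<Otimes>\<^sub>M lborel)"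
  shows "(\<integral>\<^sup>+x. \<integral>\<^sup>+y. g (x + t*y) y \<partial>lborel \<partial>lborel) = (\<integral>\<^sup>+x. \<integral>\<^sup>+y. g x y \<partial>lborel \<partial>lborel)"
proof -
  have m1: "case_prod (\<lambda>x y. g (x + t*y) y) \<in> borel_measurable (lborel \<Otimes>\<^sub>M lborel)"
    by measurable
  have "(\<integral>\<^sup>+x. \<integral>\<^sup>+y. g (x + t*y) y \<partial>lborel \<partial>lborel) = (\<integral>\<^sup>+y. \<integral>\<^sup>+x. g (x + t*y) y \<partial>lborel \<partial>lborel)"
    by (rule lborel_pair.Fubini'[OF m1, symmetric])
  also have "\<dots> = (\<integral>\<^sup>+y. \<integral>\<^sup>+x. g x y \<partial>lborel \<partial>lborel)"
  proof (rule nn_integral_cong)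
    fix y :: real
    have [measurable]: "(\<lambda>x. g x y) \<in> borel_measurable borel" by measurable
    show "(\<integral>\<^sup>+x. g (x + t*y) y \<partial>lborel) = (\<integral>\<^sup>+x. g x y \<partial>lborel)"
      using nn_integral_real_affine[of "\<lambda>x. g x y" 1 "t*y"] by (simp add: add.commute)
  qed
  also have "\<dots> = (\<integral>\<^sup>+x. \<integral>\<^sup>+y. g x y \<partial>lborel \<partial>lborel)"
    by (rule lborel_pair.Fubini'[OF g])
  finally show ?thesis .
qed

lemma shear_y:
  fixes g :: "real \<Rightarrow> real \<Rightarrow> ennreal"
  assumes g[measurable]: "case_prod g \<in> borel_measurable (lborel \<Otimes>\<^sub>M lborel)"
  shows "(\<integral>\<^sup>+x. \<integral>\<^sup>+y. g x (y + t*x) \<partial>lborel \<partial>lborel) = (\<integral>\<^sup>+x. \<integral>\<^sup>+y. g x y \<partial>lborel \<partial>lborel)"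
proof (rule nn_integral_cong)
  fix x :: real
  have [measurable]: "(\<lambda>y. g x y) \<in> borel_measurable borel" by measurable
  show "(\<integral>\<^sup>+y. g x (y + t*x) \<partial>lborel) = (\<integral>\<^sup>+y. g x y \<partial>lborel)"
    using nn_integral_real_affine[of "\<lambda>y. g x y" 1 "t*x"] by (simp add: add.commute)
qed

lemma rot_lborel:
  fixes g :: "real \<Rightarrow> real \<Rightarrow> ennreal" and c s :: real
  assumes g[measurable]: "case_prod g \<in> borel_measurable (lborel \<Otimes>\<^sub>M lborel)"
    and cs: "c\<^sup>2 + s\<^sup>2 = 1"
  shows "(\<integral>\<^sup>+x. \<integral>\<^sup>+y. g (c*x - s*y) (s*x + c*y) \<partial>lborel \<partial>lborel) = (\<integral>\<^sup>+x. \<integral>\<^sup>+y. g x y \<partial>lborel \<partial>lborel)"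
proof (cases "c = -1")
  case True
  then have s: "s = 0" using cs by simp
  have "(\<integral>\<^sup>+x. \<integral>\<^sup>+y. g (c*x - s*y) (s*x + c*y) \<partial>lborel \<partial>lborel) = (\<integral>\<^sup>+x. \<integral>\<^sup>+y. g (-x) (-y) \<partial>lborel \<partial>lborel)"
    using True s by simp
  also have "\<dots> = (\<integral>\<^sup>+x. \<integral>\<^sup>+y. g (-x) y \<partial>lborel \<partial>lborel)"
  proof (rule nn_integral_cong)
    fix x :: real
    have [measurable]: "(\<lambda>y. g (-x) y) \<in> borel_measurable borel" by measurable
    show "(\<integral>\<^sup>+y. g (-x) (-y) \<partial>lborel) = (\<integral>\<^sup>+y. g (-x) y \<partial>lborel)"
      using nn_integral_real_affine[of "\<lambda>y. g (-x) y" "-1" 0] by simp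
  qed
  also have "\<dots> = (\<integral>\<^sup>+x. \<integral>\<^sup>+y. g x y \<partial>lborel \<partial>lborel)"
  proof -
    have [measurable]: "(\<lambda>x. \<integral>\<^sup>+y. g x y \<partial>lborel) \<in> borel_measurable borel"
      by measurable
    show ?thesis
      using nn_integral_real_affine[of "\<lambda>x. \<integral>\<^sup>+y. g x y \<partial>lborel" "-1" 0] by simp
  qed
  finally show ?thesis .
next
  case False
  then have c1: "1 + c \<noteq> 0" by linarith
  define t where "t = s / (1 + c)"
  have ts: "t * s = 1 - c"
  proof -
    have "t * s = s\<^sup>2 / (1 + c)" by (simp add: t_def power2_eq_square)
    also have "\<dots> = (1 - c) * (1 + c) / (1 + c)" using cs by (simp add: algebra_simps power2_eq_square)
    finally show ?thesis using c1 by simp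
  qed
  define g1 where "g1 = (\<lambda>x y. g (x - t*y) y)"
  define g2 where "g2 = (\<lambda>x y. g1 x (y + s*x))"
  define g3 where "g3 = (\<lambda>x y. g2 (x - t*y) y)"
  have [measurable]: "case_prod g1 \<in> borel_measurable (lborel \<Otimes>\<^sub>M lborel)" unfolding g1_def by measurable
  have [measurable]: "case_prod g2 \<in> borel_measurable (lborel \<Otimes>\<^sub>M lborel)" unfolding g2_def by measurable
  have eq: "g (c*x - s*y) (s*x + c*y) = g3 x y" for x y
  proof -
    have tc: "t * (1 + c) = s" using c1 by (simp add: t_def)
    have "(x - t*y) - t*(y + s*(x - t*y)) = x - (t * s) * x - t * y * (2 - t * s)"
      by (simp add: algebra_simps)
    also have "\<dots> = c * x - (t * (1 + c)) * y" unfolding ts by (simp add: algebra_simps)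
    finally have "c*x - s*y = (x - t*y) - t*(y + s*(x - t*y))" using tc by simp
    moreover have "s*x + c*y = y + s*(x - t*y)"
    proof -
      have "y + s*(x - t*y) = s*x + (1 - t * s)*y" by (simp add: algebra_simps)
      then show ?thesis unfolding ts by simp
    qed
    ultimately show ?thesis unfolding g3_def g2_def g1_def by simp
  qed
  have "(\<integral>\<^sup>+x. \<integral>\<^sup>+y. g3 x y \<partial>lborel \<partial>lborel) = (\<integral>\<^sup>+x. \<integral>\<^sup>+y. g2 x y \<partial>lborel \<partial>lborel)"
    unfolding g3_def using shear_x[of g2 "-t"] by simp
  also have "\<dots> = (\<integral>\<^sup>+x. \<integral>\<^sup>+y. g1 x y \<partial>lborel \<partial>lborel)"
    unfolding g2_def using shear_y[of g1 s] by simp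
  also have "\<dots> = (\<integral>\<^sup>+x. \<integral>\<^sup>+y. g x y \<partial>lborel \<partial>lborel)"
    unfolding g1_def using shear_x[of g "-t"] by simp
  finally show ?thesis by (simp add: eq)
qed

interpretation gauss: prob_space gauss by (rule prob_space_gauss)

lemma meas_borel_gauss:
  assumes "f \<in> borel_measurable (borel \<Otimes>\<^sub>M (borel::real measure))"
  shows "f \<in> borel_measurable (borel \<Otimes>\<^sub>M gauss)"
proof -
  have "sets (borel \<Otimes>\<^sub>M gauss) = sets (borel \<Otimes>\<^sub>M (borel::real measure))"
    by (intro sets_pair_measure_cong) simp_all
  note ms = measurable_cong_sets[OF this refl]
  show ?thesis by (subst ms) (rule assms)
qed

lemma nn_integral_gauss:
  "h \<in> borel_measurable borel \<Longrightarrow> (\<integral>\<^sup>+x. h x \<partial>gauss) = (\<integral>\<^sup>+x. gdens x * h x \<partial>lborel)"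
  unfolding gauss_def by (subst nn_integral_density) auto

lemma gdens_rot:
  assumes cs: "c\<^sup>2 + s\<^sup>2 = 1"
  shows "gdens (c*x - s*y) * gdens (s*x + c*y) = gdens x * gdens y"
proof -
  have "(c*x - s*y)\<^sup>2 + (s*x + c*y)\<^sup>2 = (c\<^sup>2 + s\<^sup>2) * (x\<^sup>2 + y\<^sup>2)"
    by (simp add: algebra_simps power2_eq_square)
  then have e: "(c*x - s*y)\<^sup>2 + (s*x + c*y)\<^sup>2 = x\<^sup>2 + y\<^sup>2" using cs by simp
  have "gdens (c*x - s*y) * gdens (s*x + c*y) = ennreal (exp (- pi * ((c*x - s*y)\<^sup>2 + (s*x + c*y)\<^sup>2)))"
    unfolding gdens_def by (simp add: ennreal_mult'[symmetric] exp_add[symmetric] algebra_simps)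
  also have "\<dots> = gdens x * gdens y"
    unfolding e gdens_def by (simp add: ennreal_mult'[symmetric] exp_add[symmetric] algebra_simps)
  finally show ?thesis .
qed

lemma rot_gauss:
  fixes f :: "real \<Rightarrow> real \<Rightarrow> ennreal" and c s :: real
  assumes f[measurable]: "case_prod f \<in> borel_measurable (borel \<Otimes>\<^sub>M borel)"
    and cs: "c\<^sup>2 + s\<^sup>2 = 1"
  shows "(\<integral>\<^sup>+x. \<integral>\<^sup>+y. f (c*x - s*y) (s*x + c*y) \<partial>gauss \<partial>gauss) = (\<integral>\<^sup>+x. \<integral>\<^sup>+y. f x y \<partial>gauss \<partial>gauss)"
proof -
  define g where "g = (\<lambda>x y. gdens x * gdens y * f x y)"
  have gm: "case_prod g \<in> borel_measurable (borel \<Otimes>\<^sub>M borel)" unfolding g_def by measurable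
  have gm': "case_prod g \<in> borel_measurable (lborel \<Otimes>\<^sub>M lborel)"
  proof -
    have "sets (lborel \<Otimes>\<^sub>M lborel) = sets (borel \<Otimes>\<^sub>M (borel::real measure))"
      by (intro sets_pair_measure_cong) simp_all
    note ms = measurable_cong_sets[OF this refl]
    show ?thesis by (subst ms) (rule gm)
  qed
  have expand: "(\<integral>\<^sup>+x. \<integral>\<^sup>+y. h x y \<partial>gauss \<partial>gauss) = (\<integral>\<^sup>+x. \<integral>\<^sup>+y. gdens x * gdens y * h x y \<partial>lborel \<partial>lborel)"
    if [measurable]: "case_prod h \<in> borel_measurable (borel \<Otimes>\<^sub>M borel)" for h :: "real \<Rightarrow> real \<Rightarrow> ennreal"
  proof -
    have [measurable]: "case_prod h \<in> borel_measurable (borel \<Otimes>\<^sub>M gauss)"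
      by (rule meas_borel_gauss) measurable
    have "(\<integral>\<^sup>+x. \<integral>\<^sup>+y. h x y \<partial>gauss \<partial>gauss) = (\<integral>\<^sup>+x. gdens x * \<integral>\<^sup>+y. h x y \<partial>gauss \<partial>lborel)"
      by (rule nn_integral_gauss) measurable
    also have "\<dots> = (\<integral>\<^sup>+x. gdens x * \<integral>\<^sup>+y. gdens y * h x y \<partial>lborel \<partial>lborel)"
      by (intro nn_integral_cong arg_cong2[where f="(*)"] refl nn_integral_gauss) measurable
    also have "\<dots> = (\<integral>\<^sup>+x. \<integral>\<^sup>+y. gdens x * gdens y * h x y \<partial>lborel \<partial>lborel)"
      by (intro nn_integral_cong) (simp add: nn_integral_cmult[symmetric] mult.assoc)
    finally show ?thesis .
  qed
  have "(\<integral>\<^sup>+x. \<integral>\<^sup>+y. f (c*x - s*y) (s*x + c*y) \<partial>gauss \<partial>gauss)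
      = (\<integral>\<^sup>+x. \<integral>\<^sup>+y. gdens x * gdens y * f (c*x - s*y) (s*x + c*y) \<partial>lborel \<partial>lborel)"
    by (rule expand) measurable
  also have "\<dots> = (\<integral>\<^sup>+x. \<integral>\<^sup>+y. g (c*x - s*y) (s*x + c*y) \<partial>lborel \<partial>lborel)"
    unfolding g_def by (intro nn_integral_cong) (metis gdens_rot[OF cs])
  also have "\<dots> = (\<integral>\<^sup>+x. \<integral>\<^sup>+y. g x y \<partial>lborel \<partial>lborel)"
    by (rule rot_lborel[OF gm' cs])
  also have "\<dots> = (\<integral>\<^sup>+x. \<integral>\<^sup>+y. f x y \<partial>gauss \<partial>gauss)"
    unfolding g_def by (rule expand[symmetric]) measurable
  finally show ?thesis .
qed

definition GI :: "nat set \<Rightarrow> (nat \<Rightarrow> real) measure" where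
  "GI I = PiM I (\<lambda>_. gauss)"

interpretation gaussP: product_sigma_finite "\<lambda>_::nat. gauss"
  unfolding product_sigma_finite_def using gauss.sigma_finite_measure_axioms by simp

lemma space_GI: "space (GI I) = PiE I (\<lambda>_. UNIV)"
  by (simp add: GI_def space_PiM)

lemma sets_GI: "sets (GI I) = sets (PiM I (\<lambda>_. lborel))"
  unfolding GI_def by (intro sets_PiM_cong) simp_all

definition lin :: "nat set \<Rightarrow> (nat \<Rightarrow> nat \<Rightarrow> real) \<Rightarrow> (nat \<Rightarrow> real) \<Rightarrow> (nat \<Rightarrow> real)" where
  "lin I Om x = (\<lambda>p\<in>I. \<Sum>q\<in>I. Om p q * x q)"

definition orthm :: "nat set \<Rightarrow> (nat \<Rightarrow> nat \<Rightarrow> real) \<Rightarrow> bool" where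
  "orthm I Om \<longleftrightarrow> (\<forall>p\<in>I. \<forall>q\<in>I. (\<Sum>r\<in>I. Om r p * Om r q) = (if p = q then 1 else 0))"

definition ginv :: "nat set \<Rightarrow> (nat \<Rightarrow> nat \<Rightarrow> real) \<Rightarrow> bool" where
  "ginv I Om \<longleftrightarrow> (\<forall>f \<in> borel_measurable (GI I). (\<integral>\<^sup>+x. f (lin I Om x) \<partial>GI I) = (\<integral>\<^sup>+x. f x \<partial>GI I))"

definition matmul :: "nat set \<Rightarrow> (nat \<Rightarrow> nat \<Rightarrow> real) \<Rightarrow> (nat \<Rightarrow> nat \<Rightarrow> real) \<Rightarrow> (nat \<Rightarrow> nat \<Rightarrow> real)" where
  "matmul I A B = (\<lambda>p q. \<Sum>r\<in>I. A p r * B r q)"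

lemma ifmult: "(if P then 1 else 0) * (z::real) = (if P then z else 0)" by simp

lemma lin_measurable[measurable]: "lin I Om \<in> measurable (GI I) (GI I)"
proof -
  have "lin I Om \<in> measurable (PiM I (\<lambda>_. gauss)) (PiM I (\<lambda>_. gauss))"
    unfolding lin_def by measurable
  then show ?thesis by (simp add: GI_def)
qed

lemma lin_space: "lin I Om x \<in> space (GI I)"
  by (simp add: space_GI lin_def)

lemma lin_matmul: "lin I (matmul I A B) x = lin I A (lin I B x)"
proof
  fix p show "lin I (matmul I A B) x p = lin I A (lin I B x) p"
  proof (cases "p \<in> I")
    case True
    have "lin I (matmul I A B) x p = (\<Sum>q\<in>I. \<Sum>r\<in>I. A p r * (B r q * x q))"
      using True by (simp add: lin_def matmul_def sum_distrib_right mult.assoc)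
    also have "\<dots> = (\<Sum>r\<in>I. \<Sum>q\<in>I. A p r * (B r q * x q))"
      by (rule sum.swap)
    also have "\<dots> = (\<Sum>r\<in>I. A p r * (\<Sum>q\<in>I. B r q * x q))"
      by (simp add: sum_distrib_left)
    also have "\<dots> = lin I A (lin I B x) p"
      using True by (simp add: lin_def)
    finally show ?thesis .
  qed (simp add: lin_def)
qed

lemma orthm_matmul:
  assumes A: "orthm I A" and B: "orthm I B" and fin: "finite I"
  shows "orthm I (matmul I A B)"
  unfolding orthm_def
proof (intro ballI)
  fix p q assume p: "p \<in> I" and q: "q \<in> I"
  have "(\<Sum>r\<in>I. matmul I A B r p * matmul I A B r q)
      = (\<Sum>r\<in>I. \<Sum>s\<in>I. \<Sum>t\<in>I. (A r s * B s p) * (A r t * B t q))"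
    unfolding matmul_def sum_product by simp
  also have "\<dots> = (\<Sum>r\<in>I. \<Sum>s\<in>I. \<Sum>t\<in>I. (A r s * A r t) * (B s p * B t q))"
    by (intro sum.cong refl) (simp add: algebra_simps)
  also have "\<dots> = (\<Sum>s\<in>I. \<Sum>r\<in>I. \<Sum>t\<in>I. (A r s * A r t) * (B s p * B t q))"
    by (rule sum.swap)
  also have "\<dots> = (\<Sum>s\<in>I. \<Sum>t\<in>I. \<Sum>r\<in>I. (A r s * A r t) * (B s p * B t q))"
    by (intro sum.cong refl sum.swap)
  also have "\<dots> = (\<Sum>s\<in>I. \<Sum>t\<in>I. (\<Sum>r\<in>I. A r s * A r t) * (B s p * B t q))"
    by (simp add: sum_distrib_right)
  also have "\<dots> = (\<Sum>s\<in>I. \<Sum>t\<in>I. (if s = t then 1 else 0) * (B s p * B t q))"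
    using A unfolding orthm_def by (intro sum.cong refl) simp
  also have "\<dots> = (\<Sum>s\<in>I. B s p * B s q)"
    using fin by (simp add: ifmult sum.delta)
  also have "\<dots> = (if p = q then 1 else 0)"
    using B p q unfolding orthm_def by simp
  finally show "(\<Sum>r\<in>I. matmul I A B r p * matmul I A B r q) = (if p = q then 1 else 0)" .
qed

lemma lin_transpose:
  assumes A: "orthm I A" and fin: "finite I" and x: "x \<in> extensional I"
  shows "lin I (\<lambda>p q. A q p) (lin I A x) = x"
proof
  fix p show "lin I (\<lambda>p q. A q p) (lin I A x) p = x p"
  proof (cases "p \<in> I")
    case True
    have "lin I (\<lambda>p q. A q p) (lin I A x) p = (\<Sum>q\<in>I. A q p * (\<Sum>r\<in>I. A q r * x r))"
      using True by (simp add: lin_def)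
    also have "\<dots> = (\<Sum>q\<in>I. \<Sum>r\<in>I. (A q p * A q r) * x r)"
      by (simp add: sum_distrib_left mult.assoc)
    also have "\<dots> = (\<Sum>r\<in>I. \<Sum>q\<in>I. (A q p * A q r) * x r)"
      by (rule sum.swap)
    also have "\<dots> = (\<Sum>r\<in>I. (\<Sum>q\<in>I. A q p * A q r) * x r)"
      by (simp add: sum_distrib_right)
    also have "\<dots> = (\<Sum>r\<in>I. (if p = r then 1 else 0) * x r)"
      using A True unfolding orthm_def by (intro sum.cong refl) simp
    also have "\<dots> = x p" using fin True by (simp add: ifmult sum.delta)
    finally show ?thesis .
  next
    case False then show ?thesis using x by (simp add: lin_def extensional_def)
  qed
qed

lemma ginv_comp:
  assumes B: "ginv I B" and A: "ginv I A"
    and eq: "\<And>x. x \<in> space (GI I) \<Longrightarrow> lin I C x = lin I A (lin I B x)"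
  shows "ginv I C"
  unfolding ginv_def
proof
  fix f :: "_ \<Rightarrow> ennreal" assume f[measurable]: "f \<in> borel_measurable (GI I)"
  have "(\<integral>\<^sup>+x. f (lin I C x) \<partial>GI I) = (\<integral>\<^sup>+x. (\<lambda>y. f (lin I A y)) (lin I B x) \<partial>GI I)"
    by (intro nn_integral_cong) (simp add: eq)
  also have "\<dots> = (\<integral>\<^sup>+x. f (lin I A x) \<partial>GI I)"
    by (intro bspec[OF B[unfolded ginv_def]]) measurable
  also have "\<dots> = (\<integral>\<^sup>+x. f x \<partial>GI I)"
    using A[unfolded ginv_def] f by blast
  finally show "(\<integral>\<^sup>+x. f (lin I C x) \<partial>GI I) = (\<integral>\<^sup>+x. f x \<partial>GI I)" .
qed

lemma ginv_cong:
  assumes "ginv I A" "\<And>p q. p \<in> I \<Longrightarrow> q \<in> I \<Longrightarrow> A p q = B p q"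
  shows "ginv I B"
proof -
  have "lin I B = lin I A" unfolding lin_def using assms(2) by (auto intro!: ext sum.cong)
  then show ?thesis using assms(1) by (simp add: ginv_def)
qed

lemma ginv_lift:
  assumes fin: "finite J" and i: "i \<notin> J" and g: "ginv J Om"
    and d: "Om i i = 1" and z: "\<And>q. q \<in> J \<Longrightarrow> Om i q = 0 \<and> Om q i = 0"
  shows "ginv (insert i J) Om"
  unfolding ginv_def
proof
  fix f :: "_ \<Rightarrow> ennreal" assume f: "f \<in> borel_measurable (GI (insert i J))"
  then have f'[measurable]: "f \<in> borel_measurable (PiM (insert i J) (\<lambda>_. gauss))" by (simp add: GI_def)
  have eq: "lin (insert i J) Om (x(i := y)) = (lin J Om x)(i := y)" if x: "x \<in> space (GI J)" for x y
  proof
    fix p show "lin (insert i J) Om (x(i := y)) p = ((lin J Om x)(i := y)) p"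
    proof (cases "p = i")
      case True
      have "(\<Sum>q\<in>J. Om i q * (x(i := y)) q) = 0" using z by (intro sum.neutral) auto
      then show ?thesis using True fin i d by (simp add: lin_def)
    next
      case False
      show ?thesis
      proof (cases "p \<in> J")
        case True
        have "(\<Sum>q\<in>J. Om p q * (x(i := y)) q) = (\<Sum>q\<in>J. Om p q * x q)"
          using i by (intro sum.cong) auto
        then show ?thesis using True False fin i z by (simp add: lin_def)
      qed (use False in \<open>simp add: lin_def\<close>)
    qed
  qed
  have m1: "(\<lambda>x. f (lin (insert i J) Om x)) \<in> borel_measurable (PiM (insert i J) (\<lambda>_. gauss))"
    using measurable_comp[OF lin_measurable f] by (simp add: GI_def comp_def)
  have "(\<integral>\<^sup>+x. f (lin (insert i J) Om x) \<partial>GI (insert i J))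
      = (\<integral>\<^sup>+y. \<integral>\<^sup>+x. f (lin (insert i J) Om (x(i := y))) \<partial>GI J \<partial>gauss)"
    unfolding GI_def by (rule gaussP.product_nn_integral_insert_rev[OF fin i m1])
  also have "\<dots> = (\<integral>\<^sup>+y. \<integral>\<^sup>+x. (\<lambda>x. f (x(i := y))) (lin J Om x) \<partial>GI J \<partial>gauss)"
    by (intro nn_integral_cong) (simp add: eq)
  also have "\<dots> = (\<integral>\<^sup>+y. \<integral>\<^sup>+x. f (x(i := y)) \<partial>GI J \<partial>gauss)"
  proof (rule nn_integral_cong)
    fix y
    have "(\<lambda>x. f (x(i := y))) \<in> borel_measurable (PiM J (\<lambda>_. gauss))"
      using measurable_comp[OF measurable_component_update f', OF _ i] by (simp add: comp_def)
    then have "(\<lambda>x. f (x(i := y))) \<in> borel_measurable (GI J)" by (simp add: GI_def)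
    from bspec[OF g[unfolded ginv_def] this]
    show "(\<integral>\<^sup>+x. f ((lin J Om x)(i := y)) \<partial>GI J) = (\<integral>\<^sup>+x. f (x(i := y)) \<partial>GI J)"
      by simp
  qed
  also have "\<dots> = (\<integral>\<^sup>+x. f x \<partial>GI (insert i J))"
    unfolding GI_def by (rule gaussP.product_nn_integral_insert_rev[OF fin i f', symmetric])
  finally show "(\<integral>\<^sup>+x. f (lin (insert i J) Om x) \<partial>GI (insert i J)) = (\<integral>\<^sup>+x. f x \<partial>GI (insert i J))" .
qed

lemma gauss_reflect:
  assumes g[measurable]: "g \<in> borel_measurable borel"
  shows "(\<integral>\<^sup>+y. g (- y) \<partial>gauss) = (\<integral>\<^sup>+y. g y \<partial>gauss)"
proof -
  have "(\<integral>\<^sup>+y. g y \<partial>gauss) = (\<integral>\<^sup>+y. gdens y * g y \<partial>lborel)" by (rule nn_integral_gauss) measurable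
  also have "\<dots> = (\<integral>\<^sup>+y. gdens (- y) * g (- y) \<partial>lborel)"
    using nn_integral_real_affine[of "\<lambda>y. gdens y * g y" "-1" 0] by simp
  also have "\<dots> = (\<integral>\<^sup>+y. gdens y * g (- y) \<partial>lborel)" by (simp add: gdens_def)
  also have "\<dots> = (\<integral>\<^sup>+y. g (- y) \<partial>gauss)" by (rule nn_integral_gauss[symmetric]) measurable
  finally show ?thesis ..
qed

lemma ginv_single:
  assumes d: "Om i i = 1 \<or> Om i i = -1"
  shows "ginv {i} Om"
  unfolding ginv_def
proof
  fix f :: "_ \<Rightarrow> ennreal" assume f: "f \<in> borel_measurable (GI {i})"
  then have f'[measurable]: "f \<in> borel_measurable (PiM {i} (\<lambda>_. gauss))" by (simp add: GI_def)
  define g where "g y = f (\<lambda>j\<in>{i}. y)" for y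
  have gm[measurable]: "g \<in> borel_measurable gauss"
    unfolding g_def by measurable
  then have gm': "g \<in> borel_measurable borel" by (simp cong: measurable_cong_sets)
  have fx: "f x = g (x i)" if "x \<in> space (GI {i})" for x
  proof -
    have "x = (\<lambda>j\<in>{i}. x i)" using that by (auto simp: space_GI PiE_def extensional_def)
    then show ?thesis unfolding g_def by metis
  qed
  have lx: "f (lin {i} Om x) = g (Om i i * x i)" if "x \<in> space (GI {i})" for x
    using fx[OF lin_space] by (simp add: lin_def)
  have "(\<integral>\<^sup>+x. f (lin {i} Om x) \<partial>GI {i}) = (\<integral>\<^sup>+x. (\<lambda>y. g (Om i i * y)) (x i) \<partial>GI {i})"
    by (intro nn_integral_cong) (simp add: lx)
  also have "\<dots> = (\<integral>\<^sup>+y. g (Om i i * y) \<partial>gauss)"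
    unfolding GI_def by (rule gaussP.product_nn_integral_singleton) measurable
  also have "\<dots> = (\<integral>\<^sup>+y. g y \<partial>gauss)"
    using d gauss_reflect[OF gm'] by auto
  also have "\<dots> = (\<integral>\<^sup>+x. g (x i) \<partial>GI {i})"
    unfolding GI_def by (rule gaussP.product_nn_integral_singleton[symmetric]) measurable
  also have "\<dots> = (\<integral>\<^sup>+x. f x \<partial>GI {i})"
    by (intro nn_integral_cong) (simp add: fx)
  finally show "(\<integral>\<^sup>+x. f (lin {i} Om x) \<partial>GI {i}) = (\<integral>\<^sup>+x. f x \<partial>GI {i})" .
qed

definition givens :: "nat \<Rightarrow> nat \<Rightarrow> real \<Rightarrow> real \<Rightarrow> nat \<Rightarrow> nat \<Rightarrow> real" where
  "givens i j c s p q = (if p = i then (if q = i then c else 0) + (if q = j then -s else 0)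
     else if p = j then (if q = i then s else 0) + (if q = j then c else 0)
     else (if p = q then 1 else 0))"

lemma lin_givens:
  assumes fin: "finite I" and ij: "i \<in> I" "j \<in> I" "i \<noteq> j" and x: "x \<in> extensional I"
  shows "lin I (givens i j c s) x = x(i := c * x i - s * x j, j := s * x i + c * x j)"
proof
  fix p show "lin I (givens i j c s) x p = (x(i := c * x i - s * x j, j := s * x i + c * x j)) p"
  proof (cases "p \<in> I")
    case False then show ?thesis using x ij by (auto simp: lin_def extensional_def)
  next
    case True
    have "(\<Sum>q\<in>I. givens i j c s p q * x q) =
      (if p = i then c * x i - s * x j else if p = j then s * x i + c * x j else x p)"
      using fin ij True
      by (auto simp: givens_def distrib_right sum.distrib ifmult sum.delta if_distrib[where f="\<lambda>z. z * _"] cong: if_cong)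
    then show ?thesis using True ij by (auto simp: lin_def)
  qed
qed

interpretation gauss_pair: pair_sigma_finite gauss gauss ..

lemma ginv_givens:
  assumes fin: "finite I" and ij: "i \<in> I" "j \<in> I" "i \<noteq> j" and cs: "c\<^sup>2 + s\<^sup>2 = 1"
  shows "ginv I (givens i j c s)"
  unfolding ginv_def
proof
  fix f :: "_ \<Rightarrow> ennreal" assume f: "f \<in> borel_measurable (GI I)"
  define K where "K = I - {i, j}"
  have IK: "I = insert i (insert j K)" using ij by (auto simp: K_def)
  have finK: "finite K" using fin by (simp add: K_def)
  have iK: "i \<notin> insert j K" and jK: "j \<notin> K" using ij by (auto simp: K_def)
  have f'[measurable]: "f \<in> borel_measurable (PiM (insert i (insert j K)) (\<lambda>_. gauss))"
    using f by (simp add: GI_def IK)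
  let ?L = "lin I (givens i j c s)"
  have Lm[measurable]: "?L \<in> measurable (PiM (insert i (insert j K)) (\<lambda>_. gauss)) (PiM (insert i (insert j K)) (\<lambda>_. gauss))"
    using lin_measurable[of I "givens i j c s"] by (simp add: GI_def IK)
  have upd: "(\<lambda>(a, b). w(j := b, i := a)) \<in> measurable (gauss \<Otimes>\<^sub>M gauss) (PiM (insert i (insert j K)) (\<lambda>_. gauss))"
    if w: "w \<in> space (PiM K (\<lambda>_. gauss))" for w
  proof -
    have "(\<lambda>p. (w(j := snd p))(i := fst p)) \<in> measurable (gauss \<Otimes>\<^sub>M gauss) (PiM (insert i (insert j K)) (\<lambda>_. gauss))"
    proof (rule measurable_fun_upd[where J="insert j K"])
      show "(\<lambda>p. w(j := snd p)) \<in> measurable (gauss \<Otimes>\<^sub>M gauss) (PiM (insert j K) (\<lambda>_. gauss))"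
        by (rule measurable_fun_upd[where J=K]) (use w in auto)
    qed auto
    then show ?thesis by (simp add: case_prod_beta')
  qed
  have key: "(\<integral>\<^sup>+b. \<integral>\<^sup>+a. f (?L (w(j := b, i := a))) \<partial>gauss \<partial>gauss) = (\<integral>\<^sup>+b. \<integral>\<^sup>+a. f (w(j := b, i := a)) \<partial>gauss \<partial>gauss)"
    if w: "w \<in> space (PiM K (\<lambda>_. gauss))" for w
  proof -
    define \<phi> where "\<phi> a b = f (w(j := b, i := a))" for a b
    have \<phi>m: "case_prod \<phi> \<in> borel_measurable (gauss \<Otimes>\<^sub>M gauss)"
      unfolding \<phi>_def using measurable_comp[OF upd[OF w] f'] by (simp add: comp_def case_prod_beta)
    have \<phi>m': "case_prod \<phi> \<in> borel_measurable (borel \<Otimes>\<^sub>M borel)"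
    proof -
      have "sets (gauss \<Otimes>\<^sub>M gauss) = sets (borel \<Otimes>\<^sub>M (borel::real measure))"
        by (intro sets_pair_measure_cong) simp_all
      note ms = measurable_cong_sets[OF this refl]
      show ?thesis using \<phi>m by (subst (asm) ms)
    qed
    have \<psi>m: "case_prod (\<lambda>a b. \<phi> (c*a - s*b) (s*a + c*b)) \<in> borel_measurable (gauss \<Otimes>\<^sub>M gauss)"
      using \<phi>m by measurable
    have L: "?L (w(j := b, i := a)) = w(j := s*a + c*b, i := c*a - s*b)" for a b
    proof -
      have "w(j := b, i := a) \<in> extensional I" using w iK jK by (auto simp: space_PiM PiE_def extensional_def IK)
      then show ?thesis using lin_givens[OF fin ij] ij by (auto intro!: ext)
    qed
    have "(\<integral>\<^sup>+b. \<integral>\<^sup>+a. f (?L (w(j := b, i := a))) \<partial>gauss \<partial>gauss) = (\<integral>\<^sup>+b. \<integral>\<^sup>+a. \<phi> (c*a - s*b) (s*a + c*b) \<partial>gauss \<partial>gauss)"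
      by (simp add: L \<phi>_def)
    also have "\<dots> = (\<integral>\<^sup>+a. \<integral>\<^sup>+b. \<phi> (c*a - s*b) (s*a + c*b) \<partial>gauss \<partial>gauss)"
      by (rule gauss_pair.Fubini'[OF \<psi>m])
    also have "\<dots> = (\<integral>\<^sup>+a. \<integral>\<^sup>+b. \<phi> a b \<partial>gauss \<partial>gauss)"
      by (rule rot_gauss[OF \<phi>m' cs])
    also have "\<dots> = (\<integral>\<^sup>+b. \<integral>\<^sup>+a. \<phi> a b \<partial>gauss \<partial>gauss)"
      by (rule gauss_pair.Fubini'[OF \<phi>m, symmetric])
    finally show ?thesis by (simp add: \<phi>_def)
  qed
  have expand: "(\<integral>\<^sup>+x. g x \<partial>GI I) = (\<integral>\<^sup>+w. \<integral>\<^sup>+b. \<integral>\<^sup>+a. g (w(j := b, i := a)) \<partial>gauss \<partial>gauss \<partial>PiM K (\<lambda>_. gauss))"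
    if g[measurable]: "g \<in> borel_measurable (PiM (insert i (insert j K)) (\<lambda>_. gauss))" for g
  proof -
    have "(\<integral>\<^sup>+x. g x \<partial>GI I) = (\<integral>\<^sup>+z. \<integral>\<^sup>+a. g (z(i := a)) \<partial>gauss \<partial>PiM (insert j K) (\<lambda>_. gauss))"
      unfolding GI_def IK by (rule gaussP.product_nn_integral_insert) (use finK iK in auto)
    also have "\<dots> = (\<integral>\<^sup>+w. \<integral>\<^sup>+b. (\<lambda>z. \<integral>\<^sup>+a. g (z(i := a)) \<partial>gauss) (w(j := b)) \<partial>gauss \<partial>PiM K (\<lambda>_. gauss))"
      by (rule gaussP.product_nn_integral_insert) (use finK jK in auto)
    finally show ?thesis by simp
  qed
  have "(\<integral>\<^sup>+x. f (?L x) \<partial>GI I) = (\<integral>\<^sup>+w. \<integral>\<^sup>+b. \<integral>\<^sup>+a. f (?L (w(j := b, i := a))) \<partial>gauss \<partial>gauss \<partial>PiM K (\<lambda>_. gauss))"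
    by (rule expand) measurable
  also have "\<dots> = (\<integral>\<^sup>+w. \<integral>\<^sup>+b. \<integral>\<^sup>+a. f (w(j := b, i := a)) \<partial>gauss \<partial>gauss \<partial>PiM K (\<lambda>_. gauss))"
    by (rule nn_integral_cong) (rule key)
  also have "\<dots> = (\<integral>\<^sup>+x. f x \<partial>GI I)"
    by (rule expand[symmetric]) (rule f')
  finally show "(\<integral>\<^sup>+x. f (?L x) \<partial>GI I) = (\<integral>\<^sup>+x. f x \<partial>GI I)" .
qed

lemma ginv_empty: "ginv {} Om"
  unfolding ginv_def
proof (intro ballI nn_integral_cong)
  fix f :: "_ \<Rightarrow> ennreal" and x assume "x \<in> space (GI {})"
  then have "x = (\<lambda>_. undefined)" by (simp add: space_GI)
  then show "f (lin {} Om x) = f x" by (simp add: lin_def restrict_def)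
qed

lemma householder_orthm:
  fixes v :: "nat \<Rightarrow> real"
  assumes fin: "finite J" and a: "a\<^sup>2 * (\<Sum>r\<in>J. (v r)\<^sup>2) = 2 * a"
  shows "orthm J (\<lambda>p q. (if p = q then 1 else 0) - a * v p * v q)"
  unfolding orthm_def
proof (intro ballI)
  fix p q assume p: "p \<in> J" and q: "q \<in> J"
  have "(\<Sum>r\<in>J. ((if r = p then 1 else 0) - a * v r * v p) * ((if r = q then 1 else 0) - a * v r * v q))
     = (\<Sum>r\<in>J. (if r = p then 1 else 0) * (if r = q then 1 else 0))
       - (\<Sum>r\<in>J. (if r = p then a * v r * v q else 0))
       - (\<Sum>r\<in>J. (if r = q then a * v r * v p else 0))
       + (\<Sum>r\<in>J. (a\<^sup>2 * v p * v q) * (v r)\<^sup>2)"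
  proof -
    have pt: "((if r = p then 1 else 0) - a * v r * v p) * ((if r = q then 1 else 0) - a * v r * v q)
      = (if r = p then 1 else 0) * (if r = q then 1 else 0) - (if r = p then a * v r * v q else 0)
        - (if r = q then a * v r * v p else 0) + (a\<^sup>2 * v p * v q) * (v r)\<^sup>2" for r
      by (auto simp: algebra_simps power2_eq_square)
    show ?thesis unfolding pt by (simp add: sum.distrib sum_subtractf)
  qed
  also have "\<dots> = (if p = q then 1 else 0) - a * v p * v q - a * v q * v p + (a\<^sup>2 * (\<Sum>r\<in>J. (v r)\<^sup>2)) * v p * v q"
    using fin p q by (simp add: ifmult sum.delta sum.delta' sum_distrib_left[symmetric] algebra_simps)
  also have "\<dots> = (if p = q then 1 else 0)" unfolding a by (simp add: algebra_simps)
  finally show "(\<Sum>r\<in>J. ((if r = p then 1 else 0) - a * v r * v p) * ((if r = q then 1 else 0) - a * v r * v q)) = (if p = q then 1 else 0)" .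
qed

lemma givens_transpose:
  assumes "i \<noteq> j"
  shows "givens i j c (-s) q p = givens i j c s p q"
  using assms unfolding givens_def by auto

lemma orthm_givens:
  assumes fin: "finite I" and ij: "i \<in> I" "j \<in> I" "i \<noteq> j" and cs: "c\<^sup>2 + s\<^sup>2 = 1"
  shows "orthm I (givens i j c s)"
  unfolding orthm_def
proof (intro ballI)
  fix p q assume p: "p \<in> I" and q: "q \<in> I"
  define K where "K = I - {i, j}"
  have IK: "I = insert i (insert j K)" and iK: "i \<notin> K" "j \<notin> K" and finK: "finite K"
    using ij fin by (auto simp: K_def)
  have "(\<Sum>r\<in>I. givens i j c s r p * givens i j c s r q)
     = givens i j c s i p * givens i j c s i q + givens i j c s j p * givens i j c s j q
       + (\<Sum>r\<in>K. givens i j c s r p * givens i j c s r q)"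
    unfolding IK using iK finK ij by (simp add: add.assoc)
  also have "(\<Sum>r\<in>K. givens i j c s r p * givens i j c s r q) = (\<Sum>r\<in>K. (if r = p then 1 else 0) * (if r = q then 1 else 0))"
    using iK by (intro sum.cong refl) (auto simp: givens_def)
  also have "\<dots> = (if p = q \<and> p \<in> K then 1 else 0)"
    using finK by (simp add: ifmult sum.delta if_distrib[where f="\<lambda>z. z * _"] cong: if_cong)
  finally show "(\<Sum>r\<in>I. givens i j c s r p * givens i j c s r q) = (if p = q then 1 else 0)"
    using p q ij cs unfolding K_def givens_def
    by (auto simp: power2_eq_square algebra_simps)
qed

lemma lin_ext: "lin I A x \<in> extensional I" by (simp add: lin_def)

theorem orth_inv:
  assumes "finite I" shows "orthm I Om \<Longrightarrow> ginv I Om"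
  using assms
proof (induction I arbitrary: Om rule: finite_induct)
  case empty
  show ?case by (rule ginv_empty)
next
  case (insert i0 J Om)
  note fin = insert.hyps(1) and i0J = insert.hyps(2) and IH = insert.IH and orth = insert.prems
  let ?I = "insert i0 J"
  have finI: "finite ?I" using fin by simp
  define u where "u p = Om p i0" for p
  have unit: "(\<Sum>p\<in>?I. (u p)\<^sup>2) = 1"
    using orth unfolding orthm_def u_def by (simp add: power2_eq_square)
  show "ginv ?I Om"
  proof (cases "J = {}")
    case True
    then have "(u i0)\<^sup>2 = 1" using unit by simp
    then have "Om i0 i0 = 1 \<or> Om i0 i0 = -1" unfolding u_def
      by (metis power2_eq_1_iff)
    then show ?thesis using True by (simp add: ginv_single)
  next
    case False
    then obtain j where j: "j \<in> J" by blast
    have ij: "i0 \<noteq> j" using j i0J by auto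
    define nrm where "nrm = sqrt (\<Sum>p\<in>J. (u p)\<^sup>2)"
    define v where "v p = u p - (if p = j then nrm else 0)" for p
    define vv where "vv = (\<Sum>p\<in>J. (v p)\<^sup>2)"
    define a where "a = 2 / vv"
    define H where "H p q = (if p = q then 1 else 0) - a * v p * v q" for p q
    define W where "W p q = (if p = i0 \<or> q = i0 then (if p = q then 1 else 0) else H p q)" for p q
    have a2: "a\<^sup>2 * vv = 2 * a" by (cases "vv = 0") (simp_all add: a_def power2_eq_square)
    have Horth: "orthm J H"
      unfolding H_def by (rule householder_orthm[OF fin]) (use a2 in \<open>simp add: vv_def\<close>)
    have HJ: "ginv J H" by (rule IH[OF Horth])
    have WJ: "ginv J W" by (rule ginv_cong[OF HJ]) (use i0J in \<open>auto simp: W_def\<close>)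
    have WI: "ginv ?I W" by (rule ginv_lift[OF fin i0J WJ]) (use i0J in \<open>auto simp: W_def\<close>)
    have Wsym: "(\<lambda>p q. W q p) = W" by (auto simp: W_def H_def intro!: ext)
    have Worth: "orthm ?I W"
      unfolding orthm_def
    proof (intro ballI)
      fix p q assume p: "p \<in> ?I" and q: "q \<in> ?I"
      have "(\<Sum>r\<in>?I. W r p * W r q) = W i0 p * W i0 q + (\<Sum>r\<in>J. W r p * W r q)"
        using fin i0J by simp
      also have "\<dots> = (if p = q then 1 else 0)"
      proof (cases "p = i0")
        case True
        have "(\<Sum>r\<in>J. W r p * W r q) = 0" using True i0J by (intro sum.neutral) (auto simp: W_def)
        then show ?thesis using True by (simp add: W_def)
      next
        case pF: False
        show ?thesis
        proof (cases "q = i0")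
          case True
          have "(\<Sum>r\<in>J. W r p * W r q) = 0" using True i0J by (intro sum.neutral) (auto simp: W_def)
          then show ?thesis using True pF by (simp add: W_def)
        next
          case qF: False
          have pJ: "p \<in> J" and qJ: "q \<in> J" using p q pF qF by auto
          have "(\<Sum>r\<in>J. W r p * W r q) = (\<Sum>r\<in>J. H r p * H r q)"
            using i0J pF qF by (intro sum.cong refl) (auto simp: W_def)
          also have "\<dots> = (if p = q then 1 else 0)" using Horth pJ qJ unfolding orthm_def by simp
          finally show ?thesis using pF by (simp add: W_def)
        qed
      qed
      finally show "(\<Sum>r\<in>?I. W r p * W r q) = (if p = q then 1 else 0)" .
    qed
    have nrm2: "nrm\<^sup>2 = (\<Sum>p\<in>J. (u p)\<^sup>2)"
      unfolding nrm_def by (rule real_sqrt_pow2) (simp add: sum_nonneg)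
    have cs: "(u i0)\<^sup>2 + nrm\<^sup>2 = 1" using unit fin i0J nrm2 by simp
    define vu where "vu = (\<Sum>q\<in>J. v q * u q)"
    have vu_eq: "vu = nrm\<^sup>2 - nrm * u j"
    proof -
      have "vu = (\<Sum>q\<in>J. (u q)\<^sup>2 - (if q = j then nrm * u j else 0))"
        unfolding vu_def v_def by (intro sum.cong refl) (auto simp: algebra_simps power2_eq_square)
      also have "\<dots> = nrm\<^sup>2 - nrm * u j" using fin j nrm2 by (simp add: sum_subtractf)
      finally show ?thesis .
    qed
    have vv_eq: "vv = 2 * vu"
    proof -
      have "vv = (\<Sum>q\<in>J. (u q)\<^sup>2 - (if q = j then 2 * nrm * u j - nrm\<^sup>2 else 0))"
        unfolding vv_def v_def by (intro sum.cong refl) (auto simp: algebra_simps power2_eq_square)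
      also have "\<dots> = nrm\<^sup>2 - (2 * nrm * u j - nrm\<^sup>2)" using fin j nrm2 by (simp add: sum_subtractf)
      finally show ?thesis unfolding vu_eq by (simp add: algebra_simps)
    qed
    have Hu: "(\<Sum>q\<in>J. H p q * u q) = (if p = j then nrm else 0)" if p: "p \<in> J" for p
    proof -
      have "(\<Sum>q\<in>J. H p q * u q) = (\<Sum>q\<in>J. (if p = q then u q else 0) - (a * v p) * (v q * u q))"
        unfolding H_def by (intro sum.cong refl) (auto simp: algebra_simps)
      also have "\<dots> = u p - a * v p * vu"
        using fin p by (simp add: sum_subtractf sum_distrib_left[symmetric] vu_def)
      also have "\<dots> = (if p = j then nrm else 0)"
      proof (cases "vv = 0")
        case True
        then have "\<forall>q\<in>J. (v q)\<^sup>2 = 0" unfolding vv_def using fin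
          by (subst (asm) sum_nonneg_eq_0_iff) auto
        then have "v p = 0" using p by simp
        then show ?thesis using True by (simp add: a_def v_def)
      next
        case False
        then have "a * vu = 1" unfolding a_def vv_eq by simp
        then have "u p - a * v p * vu = u p - v p" by (simp add: algebra_simps)
        then show ?thesis by (simp add: v_def)
      qed
      finally show ?thesis .
    qed
    have Wu: "(\<Sum>t\<in>?I. W r t * u t) = (if r = i0 then u i0 else 0) + (if r = j then nrm else 0)"
      if r: "r \<in> ?I" for r
    proof (cases "r = i0")
      case True
      have "(\<Sum>t\<in>J. W r t * u t) = 0" using True i0J by (intro sum.neutral) (auto simp: W_def)
      then show ?thesis using True fin i0J ij by (simp add: W_def)
    next
      case False
      then have rJ: "r \<in> J" using r by simp
      have "(\<Sum>t\<in>?I. W r t * u t) = W r i0 * u i0 + (\<Sum>t\<in>J. W r t * u t)" using fin i0J by simp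
      also have "(\<Sum>t\<in>J. W r t * u t) = (\<Sum>t\<in>J. H r t * u t)"
        using i0J False by (intro sum.cong refl) (auto simp: W_def)
      finally show ?thesis using Hu[OF rJ] False by (simp add: W_def)
    qed
    define c where "c = u i0"
    define G where "G = givens i0 j c (- nrm)"
    define Gt where "Gt = givens i0 j c nrm"
    have jI: "j \<in> ?I" and i0I: "i0 \<in> ?I" using j by auto
    have cs': "c\<^sup>2 + (- nrm)\<^sup>2 = 1" and cs'': "c\<^sup>2 + nrm\<^sup>2 = 1" using cs by (simp_all add: c_def)
    have Gorth: "orthm ?I G" unfolding G_def by (rule orthm_givens[OF finI i0I jI ij cs'])
    have GI: "ginv ?I G" unfolding G_def by (rule ginv_givens[OF finI i0I jI ij cs'])
    have GtI: "ginv ?I Gt" unfolding Gt_def by (rule ginv_givens[OF finI i0I jI ij cs''])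
    have Gt_tr: "(\<lambda>p q. G q p) = Gt" unfolding G_def Gt_def using givens_transpose[OF ij] by (intro ext) simp
    define O2 where "O2 = matmul ?I G (matmul ?I W Om)"
    have O2orth: "orthm ?I O2" unfolding O2_def
      by (intro orthm_matmul Gorth Worth orth finI)
    have col: "O2 p i0 = (if p = i0 then 1 else 0)" if p: "p \<in> ?I" for p
    proof -
      have "O2 p i0 = (\<Sum>r\<in>?I. G p r * ((if r = i0 then c else 0) + (if r = j then nrm else 0)))"
        unfolding O2_def matmul_def c_def using Wu by (simp add: u_def)
      also have "\<dots> = G p i0 * c + G p j * nrm"
        using finI i0I jI by (simp add: distrib_left sum.distrib if_distrib[where f="\<lambda>z. _ * z"] sum.delta' cong: if_cong)
      also have "\<dots> = (if p = i0 then 1 else 0)"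
        using cs'' ij unfolding G_def givens_def by (auto simp: power2_eq_square algebra_simps)
      finally show ?thesis .
    qed
    have row: "O2 i0 q = (if q = i0 then 1 else 0)" if q: "q \<in> ?I" for q
    proof -
      have "(\<Sum>r\<in>?I. O2 r i0 * O2 r q) = (if i0 = q then 1 else 0)"
        using O2orth q unfolding orthm_def by blast
      moreover have "(\<Sum>r\<in>?I. O2 r i0 * O2 r q) = (\<Sum>r\<in>?I. (if r = i0 then O2 r q else 0))"
        by (intro sum.cong refl) (simp add: col)
      ultimately show ?thesis using finI by (auto simp: sum.delta)
    qed
    have O2J: "orthm J O2"
      unfolding orthm_def
    proof (intro ballI)
      fix p q assume p: "p \<in> J" and q: "q \<in> J"
      have "(\<Sum>r\<in>?I. O2 r p * O2 r q) = O2 i0 p * O2 i0 q + (\<Sum>r\<in>J. O2 r p * O2 r q)"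
        using fin i0J by simp
      moreover have "O2 i0 p = 0" using row[of p] p i0J by auto
      moreover have "(\<Sum>r\<in>?I. O2 r p * O2 r q) = (if p = q then 1 else 0)"
        using O2orth p q unfolding orthm_def by blast
      ultimately show "(\<Sum>r\<in>J. O2 r p * O2 r q) = (if p = q then 1 else 0)" by simp
    qed
    have O2I: "ginv ?I O2"
    proof (rule ginv_lift[OF fin i0J IH[OF O2J]])
      show "O2 i0 i0 = 1" using row[of i0] by simp
      fix q assume "q \<in> J" then show "O2 i0 q = 0 \<and> O2 q i0 = 0"
        using row[of q] col[of q] i0J by auto
    qed
    define C1 where "C1 = matmul ?I Gt O2"
    have C1I: "ginv ?I C1" by (rule ginv_comp[OF O2I GtI]) (simp add: C1_def lin_matmul)
    show ?thesis
    proof (rule ginv_comp[OF C1I WI])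
      fix x assume "x \<in> space (GI ?I)"
      have "lin ?I C1 x = lin ?I Gt (lin ?I G (lin ?I W (lin ?I Om x)))"
        by (simp add: C1_def O2_def lin_matmul)
      also have "\<dots> = lin ?I W (lin ?I Om x)"
        using lin_transpose[OF Gorth finI lin_ext] unfolding Gt_tr by simp
      finally have "lin ?I W (lin ?I C1 x) = lin ?I W (lin ?I W (lin ?I Om x))" by simp
      also have "\<dots> = lin ?I Om x"
        using lin_transpose[OF Worth finI lin_ext] unfolding Wsym by simp
      finally show "lin ?I Om x = lin ?I W (lin ?I C1 x)" by simp
    qed
  qed
qed

interpretation lborelP: product_sigma_finite "\<lambda>_::nat. (lborel::real measure)"
  unfolding product_sigma_finite_def using lborel.sigma_finite_measure_axioms by simp

lemma GI_density:
  assumes fin: "finite I"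
  shows "GI I = density (PiM I (\<lambda>_. lborel)) (\<lambda>x. \<Prod>i\<in>I. gdens (x i))"
proof -
  have "density (PiM I (\<lambda>_. lborel)) (\<lambda>x. \<Prod>i\<in>I. gdens (x i)) = PiM I (\<lambda>_. gauss)"
  proof (rule gaussP.PiM_eqI[OF fin])
    show "sets (density (PiM I (\<lambda>_. lborel)) (\<lambda>x. \<Prod>i\<in>I. gdens (x i))) = sets (PiM I (\<lambda>_. gauss))"
      unfolding sets_density by (rule sets_PiM_cong) simp_all
  next
    fix A assume A: "\<And>i. i \<in> I \<Longrightarrow> A i \<in> sets gauss"
    have Ab: "\<And>i. i \<in> I \<Longrightarrow> A i \<in> sets borel" using A by simp
    have PA: "PiE I A \<in> sets (PiM I (\<lambda>_. lborel))"
      using Ab fin by (intro sets_PiM_I_finite) auto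
    have "emeasure (density (PiM I (\<lambda>_. lborel)) (\<lambda>x. \<Prod>i\<in>I. gdens (x i))) (PiE I A)
        = (\<integral>\<^sup>+x. (\<Prod>i\<in>I. gdens (x i)) * indicator (PiE I A) x \<partial>PiM I (\<lambda>_. lborel))"
      by (rule emeasure_density[OF _ PA]) measurable
    also have "\<dots> = (\<integral>\<^sup>+x. (\<Prod>i\<in>I. gdens (x i) * indicator (A i) (x i)) \<partial>PiM I (\<lambda>_. lborel))"
    proof (rule nn_integral_cong)
      fix x :: "nat \<Rightarrow> real" assume x: "x \<in> space (PiM I (\<lambda>_. lborel))"
      have "indicator (PiE I A) x = (\<Prod>i\<in>I. indicator (A i) (x i) :: ennreal)"
        using x fin by (auto simp: indicator_def space_PiM PiE_def Pi_def extensional_def)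
      then show "(\<Prod>i\<in>I. gdens (x i)) * indicator (PiE I A) x = (\<Prod>i\<in>I. gdens (x i) * indicator (A i) (x i))"
        by (simp add: prod.distrib)
    qed
    also have "\<dots> = (\<Prod>i\<in>I. \<integral>\<^sup>+y. gdens y * indicator (A i) y \<partial>lborel)"
      by (rule lborelP.product_nn_integral_prod[OF fin]) (use Ab in measurable)
    also have "\<dots> = (\<Prod>i\<in>I. emeasure gauss (A i))"
    proof (rule prod.cong[OF refl])
      fix i assume i: "i \<in> I"
      show "(\<integral>\<^sup>+y. gdens y * indicator (A i) y \<partial>lborel) = emeasure gauss (A i)"
        unfolding gauss_def by (rule emeasure_density[symmetric]) (use Ab[OF i] in auto)
    qed
    finally show "emeasure (density (PiM I (\<lambda>_. lborel)) (\<lambda>x. \<Prod>i\<in>I. gdens (x i))) (PiE I A) = (\<Prod>i\<in>I. emeasure gauss (A i))" .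
  qed
  then show ?thesis by (simp add: GI_def)
qed

lemma nn_integral_GI:
  assumes fin: "finite I" and F[measurable]: "F \<in> borel_measurable (PiM I (\<lambda>_. lborel))"
    and nn: "\<And>x. 0 \<le> F x"
  shows "(\<integral>\<^sup>+x. ennreal (F x * exp (- pi * (\<Sum>i\<in>I. (x i)\<^sup>2))) \<partial>PiM I (\<lambda>_. lborel)) = (\<integral>\<^sup>+x. ennreal (F x) \<partial>GI I)"
proof -
  have "(\<integral>\<^sup>+x. ennreal (F x) \<partial>GI I) = (\<integral>\<^sup>+x. (\<Prod>i\<in>I. gdens (x i)) * ennreal (F x) \<partial>PiM I (\<lambda>_. lborel))"
    unfolding GI_density[OF fin] by (rule nn_integral_density) measurable
  also have "\<dots> = (\<integral>\<^sup>+x. ennreal (F x * exp (- pi * (\<Sum>i\<in>I. (x i)\<^sup>2))) \<partial>PiM I (\<lambda>_. lborel))"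
  proof (rule nn_integral_cong)
    fix x
    have "(\<Prod>i\<in>I. gdens (x i)) = ennreal (\<Prod>i\<in>I. exp (- pi * (x i)\<^sup>2))"
      unfolding gdens_def by (rule prod_ennreal) simp
    also have "(\<Prod>i\<in>I. exp (- pi * (x i)\<^sup>2)) = exp (- pi * (\<Sum>i\<in>I. (x i)\<^sup>2))"
      by (simp add: exp_sum[OF fin, symmetric] sum_distrib_left)
    finally show "(\<Prod>i\<in>I. gdens (x i)) * ennreal (F x) = ennreal (F x * exp (- pi * (\<Sum>i\<in>I. (x i)\<^sup>2)))"
      using nn by (simp add: ennreal_mult'[symmetric] mult.commute)
  qed
  finally show ?thesis ..
qed

lemma prob_space_GI: "prob_space (GI I)"
  unfolding GI_def by (rule prob_space_PiM) (rule prob_space_gauss)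

lemma GI_split:
  assumes f: "f \<in> borel_measurable (GI {..<M+N})"
  shows "(\<integral>\<^sup>+z. f z \<partial>GI {..<M+N}) = (\<integral>\<^sup>+y. \<integral>\<^sup>+w. f (join_vw M y w) \<partial>GI {..<N} \<partial>GI {..<M})"
proof -
  define J where "J = {M..<M+N}"
  have U: "{..<M+N} = {..<M} \<union> J" and D: "{..<M} \<inter> J = {}" and fJ: "finite J"
    by (auto simp: J_def)
  have f'[measurable]: "f \<in> borel_measurable (PiM ({..<M} \<union> J) (\<lambda>_. gauss))"
    using f by (simp add: GI_def U)
  have "(\<integral>\<^sup>+z. f z \<partial>GI {..<M+N}) = (\<integral>\<^sup>+y. \<integral>\<^sup>+u. f (merge {..<M} J (y, u)) \<partial>PiM J (\<lambda>_. gauss) \<partial>PiM {..<M} (\<lambda>_. gauss))"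
    unfolding GI_def U by (rule gaussP.product_nn_integral_fold[OF D _ fJ f']) simp
  also have "\<dots> = (\<integral>\<^sup>+y. \<integral>\<^sup>+w. f (join_vw M y w) \<partial>GI {..<N} \<partial>GI {..<M})"
    unfolding GI_def
  proof (rule nn_integral_cong)
    fix y assume y: "y \<in> space (PiM {..<M} (\<lambda>_. gauss))"
    have gm: "(\<lambda>u. f (merge {..<M} J (y, u))) \<in> borel_measurable (PiM J (\<lambda>_. gauss))"
      using y by measurable
    have t: "(\<lambda>\<omega>. \<lambda>n\<in>J. \<omega> (n - M)) \<in> measurable (PiM {..<N} (\<lambda>_. gauss)) (PiM J (\<lambda>_. gauss))"
      by measurable (auto simp: J_def)
    have R: "distr (PiM {..<N} (\<lambda>_. gauss)) (PiM J (\<lambda>_. gauss)) (\<lambda>\<omega>. \<lambda>n\<in>J. \<omega> (n - M)) = PiM J (\<lambda>_. gauss)"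
    proof -
      have "inj_on (\<lambda>n. n - M) J" by (auto simp: J_def inj_on_def)
      moreover have "(\<lambda>n. n - M) \<in> J \<rightarrow> {..<N}" by (auto simp: J_def)
      ultimately show ?thesis
        using distr_PiM_reindex[of "{..<N}" "\<lambda>_. gauss" "\<lambda>n. n - M" J] prob_space_gauss
        by simp
    qed
    have "(\<integral>\<^sup>+u. f (merge {..<M} J (y, u)) \<partial>PiM J (\<lambda>_. gauss))
        = (\<integral>\<^sup>+w. f (merge {..<M} J (y, \<lambda>n\<in>J. w (n - M))) \<partial>PiM {..<N} (\<lambda>_. gauss))"
      by (subst R[symmetric], subst nn_integral_distr[OF t]) (simp_all add: gm)
    also have "\<dots> = (\<integral>\<^sup>+w. f (join_vw M y w) \<partial>PiM {..<N} (\<lambda>_. gauss))"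
    proof (rule nn_integral_cong)
      fix w assume w: "w \<in> space (PiM {..<N} (\<lambda>_. gauss))"
      have "merge {..<M} J (y, \<lambda>n\<in>J. w (n - M)) = join_vw M y w"
      proof
        fix i show "merge {..<M} J (y, \<lambda>n\<in>J. w (n - M)) i = join_vw M y w i"
          using w by (auto simp: merge_def join_vw_def J_def space_PiM PiE_def extensional_def)
      qed
      then show "f (merge {..<M} J (y, \<lambda>n\<in>J. w (n - M))) = f (join_vw M y w)" by simp
    qed
    finally show "(\<integral>\<^sup>+u. f (merge {..<M} J (y, u)) \<partial>PiM J (\<lambda>_. gauss)) = (\<integral>\<^sup>+w. f (join_vw M y w) \<partial>PiM {..<N} (\<lambda>_. gauss))" .
  qed
  finally show ?thesis .
qed

lemma join_space: "y \<in> space (GI {..<M}) \<Longrightarrow> w \<in> space (GI {..<N}) \<Longrightarrow> join_vw M y w \<in> space (GI {..<M+N})"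
  by (auto simp: space_GI join_vw_def PiE_def extensional_def)

lemma orth_rows:
  fixes X :: "nat \<Rightarrow> nat \<Rightarrow> real"
  assumes cols: "\<And>p q. p < n \<Longrightarrow> q < n \<Longrightarrow> (\<Sum>r<n. X r p * X r q) = (if p = q then 1 else 0)"
    and p: "p < n" and q: "q < n"
  shows "(\<Sum>r<n. X p r * X q r) = (if p = q then 1 else 0)"
proof -
  define A where "A = Matrix.mat n n (\<lambda>(i, j). X i j)"
  have A: "A \<in> carrier_mat n n" by (simp add: A_def)
  have At: "transpose_mat A \<in> carrier_mat n n" by (simp add: A_def)
  have "transpose_mat A * A = 1\<^sub>m n"
  proof (rule eq_matI)
    fix i j assume i: "i < dim_row (1\<^sub>m n)" and j: "j < dim_col (1\<^sub>m n)"
    have "(transpose_mat A * A) $$ (i, j) = (\<Sum>r\<in>{0..<n}. X r i * X r j)"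
      using i j by (simp add: A_def scalar_prod_def)
    also have "\<dots> = (if i = j then 1 else 0)" using cols[of i j] i j by (simp add: atLeast0LessThan)
    finally show "(transpose_mat A * A) $$ (i, j) = 1\<^sub>m n $$ (i, j)" using i j by simp
  qed (simp_all add: A_def)
  then have "A * transpose_mat A = 1\<^sub>m n" by (rule mat_mult_left_right_inverse[OF At A])
  then have "(A * transpose_mat A) $$ (p, q) = 1\<^sub>m n $$ (p, q)" by simp
  then show ?thesis using p q by (simp add: A_def scalar_prod_def atLeast0LessThan)
qed

definition ev :: "nat \<Rightarrow> nat \<Rightarrow> real" where "ev q = (\<lambda>r. if r = q then 1 else 0)"

lemma sum_split_MN: "(\<Sum>q<m+(n::nat). f q) = (\<Sum>q<m. f q) + (\<Sum>t<n. f (m + t))"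
proof (induct n)
  case 0 then show ?case by simp
next
  case (Suc n) then show ?case by (simp add: add.assoc)
qed

lemma lincomb2:
  fixes a b z :: "nat \<Rightarrow> real"
  shows "(\<Sum>q\<in>S. a q * z q) * s + (\<Sum>q\<in>S. b q * z q) * c = (\<Sum>q\<in>S. (a q * s + b q * c) * z q)"
    and "(\<Sum>q\<in>S. a q * z q) * c - (\<Sum>q\<in>S. b q * z q) * s = (\<Sum>q\<in>S. (a q * c - b q * s) * z q)"
  by (simp_all add: sum_distrib_left sum_distrib_right sum.distrib[symmetric] sum_subtractf[symmetric] algebra_simps)

lemma rot_inv_apply:
  "rot_inv (i, j) \<theta> z p = (if p = j then z i * sin \<theta> + z j * cos \<theta> else if p = i then z i * cos \<theta> - z j * sin \<theta> else z p)"
  by (simp add: rot_inv_def)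

lemma cri_Nil: "comp_rot_inv [] th z = z"
  by (simp add: comp_rot_inv_def)

lemma cri_snoc: "comp_rot_inv (as @ [\<alpha>]) th z = rot_inv \<alpha> (th (length as)) (comp_rot_inv as th z)"
proof -
  have "fold (\<lambda>l z. rot_inv ((as @ [\<alpha>]) ! l) (th l) z) [0..<length as] z
      = fold (\<lambda>l z. rot_inv (as ! l) (th l) z) [0..<length as] z"
    by (intro fold_cong) (auto simp: nth_append)
  then show ?thesis by (simp add: comp_rot_inv_def)
qed

lemma cri_props:
  assumes "set as \<subseteq> pairs M N"
  shows "(\<forall>z p. p < M + N \<longrightarrow> comp_rot_inv as th z p = (\<Sum>q<M+N. comp_rot_inv as th (ev q) p * z q))
    \<and> (\<forall>x y. (\<Sum>p<M+N. comp_rot_inv as th x p * comp_rot_inv as th y p) = (\<Sum>p<M+N. x p * y p))"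
  using assms
proof (induction as rule: rev_induct)
  case Nil
  show ?case by (simp add: cri_Nil ev_def if_distrib[where f="\<lambda>z. z * _"] sum.delta cong: if_cong)
next
  case (snoc \<alpha> as)
  obtain i j where \<alpha>: "\<alpha> = (i, j)" by (cases \<alpha>)
  have ij: "i < j" "j < M + N" using snoc.prems \<alpha> by (auto simp: pairs_def)
  have IH: "\<forall>z p. p < M + N \<longrightarrow> comp_rot_inv as th z p = (\<Sum>q<M+N. comp_rot_inv as th (ev q) p * z q)"
    "\<forall>x y. (\<Sum>p<M+N. comp_rot_inv as th x p * comp_rot_inv as th y p) = (\<Sum>p<M+N. x p * y p)"
    using snoc by auto
  let ?F = "comp_rot_inv as th"
  let ?t = "th (length as)"
  have F': "comp_rot_inv (as @ [\<alpha>]) th z p = (if p = j then ?F z i * sin ?t + ?F z j * cos ?t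
      else if p = i then ?F z i * cos ?t - ?F z j * sin ?t else ?F z p)" for z p
    by (simp add: cri_snoc \<alpha> rot_inv_apply)
  have rep: "comp_rot_inv (as @ [\<alpha>]) th z p = (\<Sum>q<M+N. comp_rot_inv (as @ [\<alpha>]) th (ev q) p * z q)"
    if p: "p < M + N" for z p
  proof -
    have Fi: "?F z i = (\<Sum>q<M+N. ?F (ev q) i * z q)" and Fj: "?F z j = (\<Sum>q<M+N. ?F (ev q) j * z q)"
      using IH(1) ij by auto
    have Fp: "?F z p = (\<Sum>q<M+N. ?F (ev q) p * z q)" using IH(1) p by auto
    show ?thesis unfolding F' Fi Fj Fp lincomb2 by simp
  qed
  have ip: "(\<Sum>p<M+N. comp_rot_inv (as @ [\<alpha>]) th x p * comp_rot_inv (as @ [\<alpha>]) th y p) = (\<Sum>p<M+N. x p * y p)" for x y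
  proof -
    define a where "a = ?F x i" define b where "b = ?F x j"
    define a' where "a' = ?F y i" define b' where "b' = ?F y j"
    define c where "c = cos ?t" define s where "s = sin ?t"
    have cs: "c\<^sup>2 + s\<^sup>2 = 1" by (simp add: c_def s_def)
    define Di where "Di = (a * c - b * s) * (a' * c - b' * s) - a * a'"
    define Dj where "Dj = (a * s + b * c) * (a' * s + b' * c) - b * b'"
    have D0: "Di + Dj = 0"
    proof -
      have "Di + Dj = (a * a' + b * b') * (c\<^sup>2 + s\<^sup>2) - a * a' - b * b'"
        unfolding Di_def Dj_def by (simp add: algebra_simps power2_eq_square)
      then show ?thesis using cs by simp
    qed
    have pt: "comp_rot_inv (as @ [\<alpha>]) th x p * comp_rot_inv (as @ [\<alpha>]) th y p
       = ?F x p * ?F y p + (if p = i then Di else 0) + (if p = j then Dj else 0)" for p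
      using ij unfolding F' Di_def Dj_def a_def b_def a'_def b'_def c_def s_def
      by (auto simp: algebra_simps)
    have "(\<Sum>p<M+N. comp_rot_inv (as @ [\<alpha>]) th x p * comp_rot_inv (as @ [\<alpha>]) th y p)
       = (\<Sum>p<M+N. ?F x p * ?F y p) + Di + Dj"
      unfolding pt using ij by (simp add: sum.distrib sum.delta)
    then show ?thesis using D0 IH(2) by simp
  qed
  show ?case using rep ip by blast
qed

definition Pm :: "(nat \<times> nat) list \<Rightarrow> (nat \<Rightarrow> real) \<Rightarrow> nat \<Rightarrow> nat \<Rightarrow> real" where
  "Pm as th p q = comp_rot_inv as th (ev q) p"

lemma Pm_cols:
  assumes "set as \<subseteq> pairs M N" "q < M + N" "q' < M + N"
  shows "(\<Sum>p<M+N. Pm as th p q * Pm as th p q') = (if q = q' then 1 else 0)"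
proof -
  have "(\<Sum>p<M+N. Pm as th p q * Pm as th p q') = (\<Sum>p<M+N. ev q p * ev q' p)"
    using cri_props[OF assms(1)] unfolding Pm_def by blast
  also have "\<dots> = (if q = q' then 1 else 0)" using assms
    by (simp add: ev_def if_distrib[where f="\<lambda>z. z * _"] sum.delta cong: if_cong)
  finally show ?thesis .
qed

lemma Pm_rows:
  assumes "set as \<subseteq> pairs M N" "p < M + N" "p' < M + N"
  shows "(\<Sum>q<M+N. Pm as th p q * Pm as th p' q) = (if p = p' then 1 else 0)"
  by (rule orth_rows[OF Pm_cols[OF assms(1)] assms(2,3)])

lemma cri_join:
  assumes "set as \<subseteq> pairs M N" "p < M"
  shows "comp_rot_inv as th (join_vw M v w) p = (\<Sum>q<M. A_blk as th p q * v q) + (\<Sum>t<N. Pm as th p (M + t) * w t)"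
proof -
  have "comp_rot_inv as th (join_vw M v w) p = (\<Sum>q<M+N. Pm as th p q * join_vw M v w q)"
    using cri_props[OF assms(1)] assms(2) unfolding Pm_def by auto
  also have "\<dots> = (\<Sum>q<M. A_blk as th p q * v q) + (\<Sum>t<N. Pm as th p (M + t) * w t)"
    unfolding sum_split_MN by (simp add: join_vw_def Pm_def A_blk_def ev_def)
  finally show ?thesis .
qed

lemma block_rows:
  assumes "set as \<subseteq> pairs M N" "p < M" "p' < M"
  shows "(\<Sum>q<M. A_blk as th p q * A_blk as th p' q) + (\<Sum>t<N. Pm as th p (M + t) * Pm as th p' (M + t))
     = (if p = p' then 1 else 0)"
  using Pm_rows[OF assms(1), of p p'] assms unfolding sum_split_MN
  by (simp add: Pm_def A_blk_def ev_def)

definition Qd :: "nat \<Rightarrow> (nat \<Rightarrow> real) \<Rightarrow> (nat \<Rightarrow> nat \<Rightarrow> real) \<Rightarrow> nat \<Rightarrow> nat \<Rightarrow> real" where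
  "Qd M Pv Z x y = (if x < M then (if y < M then (if x = y then 1 - Pv x else 0) else Z x (y - M))
      else (if y < M then - Z y (x - M)
            else (if x = y then 1 else 0) - (\<Sum>r<M. Z r (x - M) * Z r (y - M))))"

lemma dil_orthm:
  fixes Z :: "nat \<Rightarrow> nat \<Rightarrow> real" and Pv :: "nat \<Rightarrow> real"
  assumes ZZ: "\<And>p p'. p < M \<Longrightarrow> p' < M \<Longrightarrow> (\<Sum>t<N. Z p t * Z p' t) = (if p = p' then Pv p else 0)"
    and Pi01: "\<And>p. Pv p = 0 \<or> Pv p = 1"
    and PiZ: "\<And>p t. p < M \<Longrightarrow> Pv p * Z p t = Z p t"
  shows "orthm {..<M+N} (Qd M Pv Z)"
proof -
  define ZtZ where "ZtZ s q = (\<Sum>r<M. Z r s * Z r q)" for s q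
  have QMM: "Qd M Pv Z r x = (if r = x then 1 - Pv r else 0)" if "r < M" "x < M" for r x
    using that by (simp add: Qd_def)
  have QMN: "Qd M Pv Z r (M + q) = Z r q" if "r < M" for r q
    using that by (simp add: Qd_def)
  have QNM: "Qd M Pv Z (M + s) x = - Z x s" if "x < M" for s x
    using that by (simp add: Qd_def)
  have QNN: "Qd M Pv Z (M + s) (M + q) = (if s = q then 1 else 0) - ZtZ s q" for s q
    by (simp add: Qd_def ZtZ_def)
  have c2: "(\<Sum>r<M+N. Qd M Pv Z r p * Qd M Pv Z r (M + q)) = 0" if p: "p < M" and q: "q < N" for p q
  proof -
    have s1: "(\<Sum>r<M. Qd M Pv Z r p * Qd M Pv Z r (M + q)) = (1 - Pv p) * Z p q"
      using p by (simp add: QMM QMN if_distrib[where f="\<lambda>z. z * _"] sum.delta cong: if_cong)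
    have "(\<Sum>s<N. Z p s * ZtZ s q) = (\<Sum>s<N. \<Sum>r<M. Z p s * Z r s * Z r q)"
      unfolding ZtZ_def by (simp add: sum_distrib_left mult.assoc)
    also have "\<dots> = (\<Sum>r<M. (\<Sum>s<N. Z p s * Z r s) * Z r q)"
      by (subst sum.swap) (simp add: sum_distrib_right)
    also have "\<dots> = (\<Sum>r<M. (if p = r then Pv p else 0) * Z r q)"
      using p by (intro sum.cong refl) (simp add: ZZ)
    also have "\<dots> = Pv p * Z p q" using p by (simp add: if_distrib[where f="\<lambda>z. z * _"] sum.delta cong: if_cong)
    finally have s3: "(\<Sum>s<N. Z p s * ZtZ s q) = Pv p * Z p q" .
    have "(\<Sum>s<N. Qd M Pv Z (M + s) p * Qd M Pv Z (M + s) (M + q))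
        = (\<Sum>s<N. Z p s * ZtZ s q - (if s = q then Z p s else 0))"
      by (intro sum.cong refl) (simp only: QNM[OF p] QNN, simp add: algebra_simps)
    also have "\<dots> = Pv p * Z p q - Z p q" using q by (simp add: sum_subtractf s3)
    finally have s2: "(\<Sum>s<N. Qd M Pv Z (M + s) p * Qd M Pv Z (M + s) (M + q)) = Pv p * Z p q - Z p q" .
    show ?thesis unfolding sum_split_MN s1 s2 by (simp add: algebra_simps)
  qed
  show ?thesis
    unfolding orthm_def
  proof (intro ballI)
    fix x y assume x: "x \<in> {..<M+N}" and y: "y \<in> {..<M+N}"
    show "(\<Sum>r\<in>{..<M+N}. Qd M Pv Z r x * Qd M Pv Z r y) = (if x = y then 1 else 0)"
    proof (cases "x < M")
      case xM: True
      show ?thesis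
      proof (cases "y < M")
        case yM: True
        have s1: "(\<Sum>r<M. Qd M Pv Z r x * Qd M Pv Z r y) = (if x = y then (1 - Pv x) * (1 - Pv x) else 0)"
          using xM yM by (simp add: QMM ifmult sum.delta if_distrib[where f="\<lambda>z. z * _"] cong: if_cong)
        have s2: "(\<Sum>s<N. Qd M Pv Z (M + s) x * Qd M Pv Z (M + s) y) = (if x = y then Pv x else 0)"
          using xM yM ZZ[of x y] by (simp add: QNM)
        have "(1 - Pv x) * (1 - Pv x) + Pv x = 1" using Pi01[of x] by auto
        then show ?thesis unfolding sum_split_MN s1 s2 by auto
      next
        case yN: False
        then obtain q where q: "y = M + q" "q < N" using y by (metis add_less_cancel_left le_Suc_ex lessThan_iff not_less)
        show ?thesis using c2[OF xM q(2)] q xM by simp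
      qed
    next
      case xN: False
      then obtain q where q: "x = M + q" "q < N" using x by (metis add_less_cancel_left le_Suc_ex lessThan_iff not_less)
      show ?thesis
      proof (cases "y < M")
        case yM: True
        show ?thesis using c2[OF yM q(2)] q yM by (simp add: mult.commute)
      next
        case yN: False
        then obtain q' where q': "y = M + q'" "q' < N" using y by (metis add_less_cancel_left le_Suc_ex lessThan_iff not_less)
        have s1: "(\<Sum>r<M. Qd M Pv Z r x * Qd M Pv Z r y) = ZtZ q q'"
          unfolding q q' by (simp add: QMN ZtZ_def)
        have sq: "(\<Sum>s<N. ZtZ s q * ZtZ s q') = ZtZ q q'"
        proof -
          have "(\<Sum>s<N. ZtZ s q * ZtZ s q') = (\<Sum>s<N. \<Sum>r<M. \<Sum>r'<M. (Z r s * Z r' s) * (Z r q * Z r' q'))"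
            unfolding ZtZ_def sum_product by (intro sum.cong refl) (simp add: algebra_simps)
          also have "\<dots> = (\<Sum>r<M. \<Sum>r'<M. \<Sum>s<N. (Z r s * Z r' s) * (Z r q * Z r' q'))"
            by (subst sum.swap) (intro sum.cong refl sum.swap)
          also have "\<dots> = (\<Sum>r<M. \<Sum>r'<M. (if r = r' then Pv r else 0) * (Z r q * Z r' q'))"
            by (intro sum.cong refl) (simp add: sum_distrib_right[symmetric] ZZ)
          also have "\<dots> = (\<Sum>r<M. Pv r * (Z r q * Z r q'))"
            by (intro sum.cong refl) (simp add: if_distrib[where f="\<lambda>z. z * _"] sum.delta' cong: if_cong)
          also have "\<dots> = ZtZ q q'"
            unfolding ZtZ_def by (intro sum.cong refl) (simp add: PiZ mult.assoc[symmetric])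
          finally show ?thesis .
        qed
        have sym: "ZtZ q' q = ZtZ q q'" unfolding ZtZ_def by (simp add: mult.commute)
        have "(\<Sum>s<N. Qd M Pv Z (M + s) x * Qd M Pv Z (M + s) y)
            = (\<Sum>s<N. (if s = q then 1 else 0) * (if s = q' then 1 else 0)
                 - (if s = q then ZtZ s q' else 0) - (if s = q' then ZtZ s q else 0) + ZtZ s q * ZtZ s q')"
          unfolding q q' QNN by (intro sum.cong refl) (auto simp: algebra_simps)
        also have "\<dots> = (if q = q' then 1 else 0) - ZtZ q q' - ZtZ q' q + ZtZ q q'"
          using q q' by (simp add: sum.distrib sum_subtractf sq ifmult sum.delta)
        finally have s2: "(\<Sum>s<N. Qd M Pv Z (M + s) x * Qd M Pv Z (M + s) y) = (if q = q' then 1 else 0) - ZtZ q q'"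
          using sym by simp
        show ?thesis unfolding sum_split_MN s1 s2 using q q' by simp
      qed
    qed
  qed
qed

lemma E1:
  fixes A U V :: "nat \<Rightarrow> nat \<Rightarrow> real"
  assumes svd: "\<And>p q. p < M \<Longrightarrow> q < M \<Longrightarrow> A p q = (\<Sum>r<M. U p r * gam r * V q r)" and p: "p < M"
  shows "(\<Sum>q<M. A p q * v q) = (\<Sum>r<M. U p r * (gam r * (\<Sum>q<M. V q r * v q)))"
proof -
  have "(\<Sum>q<M. A p q * v q) = (\<Sum>q<M. \<Sum>r<M. U p r * (gam r * (V q r * v q)))"
    using p by (simp add: svd sum_distrib_right mult.assoc)
  also have "\<dots> = (\<Sum>r<M. \<Sum>q<M. U p r * (gam r * (V q r * v q)))" by (rule sum.swap)
  also have "\<dots> = (\<Sum>r<M. U p r * (gam r * (\<Sum>q<M. V q r * v q)))"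
    by (simp add: sum_distrib_left)
  finally show ?thesis .
qed

lemma E2:
  fixes B U :: "nat \<Rightarrow> nat \<Rightarrow> real"
  assumes U2: "\<And>p q. p < M \<Longrightarrow> q < M \<Longrightarrow> (\<Sum>r<M. U p r * U q r) = (if p = q then 1 else 0)"
    and p: "p < M"
  shows "(\<Sum>r<M. U p r * (\<Sum>t<N. (\<Sum>s<M. U s r * B s t) * w t)) = (\<Sum>t<N. B p t * w t)"
proof -
  have "(\<Sum>r<M. U p r * (\<Sum>t<N. (\<Sum>s<M. U s r * B s t) * w t))
      = (\<Sum>r<M. \<Sum>t<N. \<Sum>s<M. (U p r * U s r) * (B s t * w t))"
    by (simp add: sum_distrib_left sum_distrib_right mult_ac)
  also have "\<dots> = (\<Sum>r<M. \<Sum>s<M. \<Sum>t<N. (U p r * U s r) * (B s t * w t))"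
    by (intro sum.cong refl sum.swap)
  also have "\<dots> = (\<Sum>s<M. \<Sum>r<M. \<Sum>t<N. (U p r * U s r) * (B s t * w t))" by (rule sum.swap)
  also have "\<dots> = (\<Sum>s<M. (\<Sum>r<M. U p r * U s r) * (\<Sum>t<N. B s t * w t))"
    by (simp only: sum_product)
  also have "\<dots> = (\<Sum>s<M. (if p = s then 1 else 0) * (\<Sum>t<N. B s t * w t))"
    using p by (intro sum.cong refl) (simp add: U2)
  also have "\<dots> = (\<Sum>t<N. B p t * w t)" using p by (simp add: ifmult sum.delta)
  finally show ?thesis .
qed

lemma EUA:
  fixes A U V :: "nat \<Rightarrow> nat \<Rightarrow> real"
  assumes svd: "\<And>p q. p < M \<Longrightarrow> q < M \<Longrightarrow> A p q = (\<Sum>r<M. U p r * gam r * V q r)"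
    and U_orth: "\<And>p q. p < M \<Longrightarrow> q < M \<Longrightarrow> (\<Sum>r<M. U r p * U r q) = (if p = q then 1 else 0)"
    and r: "r < M" and q: "q < M"
  shows "(\<Sum>p<M. U p r * A p q) = gam r * V q r"
proof -
  have "(\<Sum>p<M. U p r * A p q) = (\<Sum>p<M. \<Sum>s<M. (U p r * U p s) * (gam s * V q s))"
    using q by (simp add: svd sum_distrib_left mult.assoc mult.left_commute)
  also have "\<dots> = (\<Sum>s<M. \<Sum>p<M. (U p r * U p s) * (gam s * V q s))" by (rule sum.swap)
  also have "\<dots> = (\<Sum>s<M. (if r = s then 1 else 0) * (gam s * V q s))"
    using r by (intro sum.cong refl) (simp add: sum_distrib_right[symmetric] U_orth)
  also have "\<dots> = gam r * V q r" using r by (simp add: ifmult sum.delta)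
  finally show ?thesis .
qed

lemma E3:
  fixes A B U V :: "nat \<Rightarrow> nat \<Rightarrow> real"
  assumes svd: "\<And>p q. p < M \<Longrightarrow> q < M \<Longrightarrow> A p q = (\<Sum>r<M. U p r * gam r * V q r)"
    and U_orth: "\<And>p q. p < M \<Longrightarrow> q < M \<Longrightarrow> (\<Sum>r<M. U r p * U r q) = (if p = q then 1 else 0)"
    and V_orth: "\<And>p q. p < M \<Longrightarrow> q < M \<Longrightarrow> (\<Sum>r<M. V r p * V r q) = (if p = q then 1 else 0)"
    and rows: "\<And>p p'. p < M \<Longrightarrow> p' < M \<Longrightarrow> (\<Sum>q<M. A p q * A p' q) + (\<Sum>t<N. B p t * B p' t) = (if p = p' then 1 else 0)"
    and r: "r < M" and r': "r' < M"
  shows "(\<Sum>t<N. (\<Sum>p<M. U p r * B p t) * (\<Sum>p<M. U p r' * B p t)) = (if r = r' then 1 - (gam r)\<^sup>2 else 0)"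
proof -
  have "(\<Sum>t<N. (\<Sum>p<M. U p r * B p t) * (\<Sum>p<M. U p r' * B p t))
      = (\<Sum>t<N. \<Sum>p<M. \<Sum>p'<M. (U p r * U p' r') * (B p t * B p' t))"
    unfolding sum_product by (intro sum.cong refl) (simp add: algebra_simps)
  also have "\<dots> = (\<Sum>p<M. \<Sum>p'<M. \<Sum>t<N. (U p r * U p' r') * (B p t * B p' t))"
    by (subst sum.swap) (intro sum.cong refl sum.swap)
  also have "\<dots> = (\<Sum>p<M. \<Sum>p'<M. (U p r * U p' r') * ((if p = p' then 1 else 0) - (\<Sum>q<M. A p q * A p' q)))"
  proof (intro sum.cong refl)
    fix p p' assume "p \<in> {..<M}" "p' \<in> {..<M}"
    then have "(\<Sum>t<N. B p t * B p' t) = (if p = p' then 1 else 0) - (\<Sum>q<M. A p q * A p' q)"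
      using rows[of p p'] by simp
    then show "(\<Sum>t<N. (U p r * U p' r') * (B p t * B p' t)) = (U p r * U p' r') * ((if p = p' then 1 else 0) - (\<Sum>q<M. A p q * A p' q))"
      by (simp add: sum_distrib_left[symmetric])
  qed
  also have "\<dots> = (\<Sum>p<M. \<Sum>p'<M. (if p = p' then U p r * U p' r' else 0)
      - (\<Sum>q<M. (U p r * A p q) * (U p' r' * A p' q)))"
    by (intro sum.cong refl) (simp add: right_diff_distrib sum_distrib_left mult_ac)
  also have "\<dots> = (\<Sum>p<M. \<Sum>p'<M. (if p = p' then U p r * U p' r' else 0))
      - (\<Sum>p<M. \<Sum>p'<M. \<Sum>q<M. (U p r * A p q) * (U p' r' * A p' q))"
    by (simp add: sum_subtractf)
  also have "(\<Sum>p<M. \<Sum>p'<M. (if p = p' then U p r * U p' r' else 0)) = (if r = r' then 1 else 0)"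
    using U_orth[OF r r'] by (simp add: sum.delta)
  also have "(\<Sum>p<M. \<Sum>p'<M. \<Sum>q<M. (U p r * A p q) * (U p' r' * A p' q))
      = (\<Sum>q<M. (\<Sum>p<M. U p r * A p q) * (\<Sum>p'<M. U p' r' * A p' q))"
  proof -
    have "(\<Sum>p<M. \<Sum>p'<M. \<Sum>q<M. (U p r * A p q) * (U p' r' * A p' q))
        = (\<Sum>p<M. \<Sum>q<M. \<Sum>p'<M. (U p r * A p q) * (U p' r' * A p' q))"
      by (intro sum.cong refl sum.swap)
    also have "\<dots> = (\<Sum>q<M. \<Sum>p<M. \<Sum>p'<M. (U p r * A p q) * (U p' r' * A p' q))"
      by (rule sum.swap)
    also have "\<dots> = (\<Sum>q<M. (\<Sum>p<M. U p r * A p q) * (\<Sum>p'<M. U p' r' * A p' q))"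
      by (simp add: sum_product)
    finally show ?thesis .
  qed
  also have "\<dots> = (\<Sum>q<M. (gam r * gam r') * (V q r * V q r'))"
  proof (intro sum.cong refl)
    fix q assume "q \<in> {..<M}"
    then have q: "q < M" by simp
    show "(\<Sum>p<M. U p r * A p q) * (\<Sum>p'<M. U p' r' * A p' q) = (gam r * gam r') * (V q r * V q r')"
    proof -
      have e1: "(\<Sum>p<M. U p r * A p q) = gam r * V q r"
        by (rule EUA[where M=M and A=A and U=U and V=V and gam=gam]) (use svd U_orth r q in auto)
      have e2: "(\<Sum>p<M. U p r' * A p q) = gam r' * V q r'"
        by (rule EUA[where M=M and A=A and U=U and V=V and gam=gam]) (use svd U_orth r' q in auto)
      show ?thesis unfolding e1 e2 by (simp add: mult_ac)
    qed
  qed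
  also have "\<dots> = (if r = r' then (gam r)\<^sup>2 else 0)"
    using V_orth[OF r r'] by (simp add: sum_distrib_left[symmetric] power2_eq_square)
  finally show ?thesis by simp
qed

lemma meas_restr_affine:
  fixes c :: "nat \<Rightarrow> real" and C :: "nat \<Rightarrow> nat \<Rightarrow> real"
  assumes "M' \<le> L"
  shows "(\<lambda>z. restrict (\<lambda>p. c p + (\<Sum>q<M'. C p q * z q)) {..<M}) \<in> measurable (PiM {..<L} (\<lambda>_. lborel)) (PiM {..<M} (\<lambda>_. lborel))"
proof (rule measurable_restrict)
  fix p assume "p \<in> {..<M}"
  have [measurable]: "(\<lambda>z. z q) \<in> borel_measurable (PiM {..<L} (\<lambda>_. lborel))" if "q < M'" for q
    using that assms measurable_component_singleton[of q "{..<L}" "\<lambda>_. lborel"] by simp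
  have "(\<lambda>z. c p + (\<Sum>q<M'. C p q * z q)) \<in> borel_measurable (PiM {..<L} (\<lambda>_. lborel))"
    by measurable
  then show "(\<lambda>z. c p + (\<Sum>q<M'. C p q * z q)) \<in> measurable (PiM {..<L} (\<lambda>_. lborel)) ((\<lambda>_. lborel) p)"
    by simp
qed

lemma inner_eq:
  fixes M N :: nat and h0 :: "(nat \<Rightarrow> real) \<Rightarrow> real" and v :: "nat \<Rightarrow> real"
    and A B U V :: "nat \<Rightarrow> nat \<Rightarrow> real" and gam :: "nat \<Rightarrow> real"
  assumes h0_meas: "h0 \<in> borel_measurable (PiM {..<M} (\<lambda>_. lborel))"
    and h0_nonneg: "\<And>x. 0 \<le> h0 x"
    and U_orth: "\<And>p q. p < M \<Longrightarrow> q < M \<Longrightarrow> (\<Sum>r<M. U r p * U r q) = (if p = q then 1 else 0)"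
    and V_orth: "\<And>p q. p < M \<Longrightarrow> q < M \<Longrightarrow> (\<Sum>r<M. V r p * V r q) = (if p = q then 1 else 0)"
    and gam_range: "\<And>j. j < M \<Longrightarrow> 0 \<le> gam j \<and> gam j \<le> 1"
    and svd: "\<And>p q. p < M \<Longrightarrow> q < M \<Longrightarrow> A p q = (\<Sum>r<M. U p r * gam r * V q r)"
    and rows: "\<And>p p'. p < M \<Longrightarrow> p' < M \<Longrightarrow> (\<Sum>q<M. A p q * A p' q) + (\<Sum>t<N. B p t * B p' t) = (if p = p' then 1 else 0)"
  shows "(\<integral>\<^sup>+w. ennreal (h0 (restrict (\<lambda>p. (\<Sum>q<M. A p q * v q) + (\<Sum>t<N. B p t * w t)) {..<M})
              * exp (- pi * (\<Sum>i<N. (w i)\<^sup>2))) \<partial>PiM {..<N} (\<lambda>_. lborel))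
       = (\<integral>\<^sup>+w. ennreal (h0U M h0 U (\<lambda>r. gam r * (\<Sum>q<M. V q r * v q) + sqrt (1 - (gam r)\<^sup>2) * w r)
              * exp (- pi * (\<Sum>i<M. (w i)\<^sup>2))) \<partial>PiM {..<M} (\<lambda>_. lborel))"
proof -
  note [measurable] = h0_meas
  have U2: "(\<Sum>r<M. U p r * U q r) = (if p = q then 1 else 0)" if "p < M" "q < M" for p q
    by (rule orth_rows[OF U_orth that])
  define a where "a r = gam r * (\<Sum>q<M. V q r * v q)" for r
  define d where "d r = sqrt (1 - (gam r)\<^sup>2)" for r
  define T where "T r t = (\<Sum>p<M. U p r * B p t)" for r t
  define Pv where "Pv r = (if d r = 0 then 0 else (1::real))" for r
  define Z where "Z r t = T r t / d r" for r t
  have d2: "(d r)\<^sup>2 = 1 - (gam r)\<^sup>2" if "r < M" for r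
  proof -
    have "(gam r)\<^sup>2 \<le> 1" using gam_range[OF that] by (simp add: power_le_one)
    then show ?thesis unfolding d_def by simp
  qed
  have TT: "(\<Sum>t<N. T r t * T r' t) = (if r = r' then (d r)\<^sup>2 else 0)" if "r < M" "r' < M" for r r'
    unfolding T_def using E3[OF svd U_orth V_orth rows that] d2 that by simp
  have Tz: "T r t = 0" if r: "r < M" and dr: "d r = 0" and t: "t < N" for r t
  proof -
    have "(\<Sum>t<N. (T r t)\<^sup>2) = 0" using TT[OF r r] dr by (simp add: power2_eq_square)
    then have "\<forall>t\<in>{..<N}. (T r t)\<^sup>2 = 0" by (subst (asm) sum_nonneg_eq_0_iff) auto
    then show ?thesis using t by simp
  qed
  have ZZ: "(\<Sum>t<N. Z p t * Z p' t) = (if p = p' then Pv p else 0)" if "p < M" "p' < M" for p p'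
  proof -
    have "(\<Sum>t<N. Z p t * Z p' t) = (\<Sum>t<N. T p t * T p' t) / (d p * d p')"
      unfolding Z_def by (simp add: sum_divide_distrib)
    also have "\<dots> = (if p = p' then Pv p else 0)"
      unfolding TT[OF that] Pv_def by (auto simp: power2_eq_square)
    finally show ?thesis .
  qed
  have Pv01: "Pv p = 0 \<or> Pv p = 1" for p by (simp add: Pv_def)
  have PvZ: "Pv p * Z p t = Z p t" if "p < M" for p t by (simp add: Pv_def Z_def)
  have dZ: "d r * Z r t = T r t" if "r < M" "t < N" for r t
    using Tz[OF that(1) _ that(2)] by (cases "d r = 0") (simp_all add: Z_def)
  have dPv: "d r * (1 - Pv r) = 0" for r by (simp add: Pv_def)
  define Qm where "Qm = Qd M Pv Z"
  have orthQ: "orthm {..<M+N} Qm" unfolding Qm_def by (rule dil_orthm[OF ZZ Pv01 PvZ])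
  have ginvQ: "ginv {..<M+N} Qm" by (rule orth_inv[OF _ orthQ]) simp
  have act: "lin {..<M+N} Qm (join_vw M y w) r = (1 - Pv r) * y r + (\<Sum>t<N. Z r t * w t)" if r: "r < M" for y w r
  proof -
    have "lin {..<M+N} Qm (join_vw M y w) r = (\<Sum>x<M+N. Qm r x * join_vw M y w x)"
      using r by (simp add: lin_def)
    also have "\<dots> = (\<Sum>x<M. (if r = x then 1 - Pv r else 0) * y x) + (\<Sum>t<N. Z r t * w t)"
      unfolding sum_split_MN using r by (simp add: Qm_def Qd_def join_vw_def)
    also have "\<dots> = (1 - Pv r) * y r + (\<Sum>t<N. Z r t * w t)"
      using r by (simp add: if_distrib[where f="\<lambda>z. z * _"] sum.delta cong: if_cong)
    finally show ?thesis .
  qed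
  define Hh where "Hh x = ennreal (h0U M h0 U x)" for x
  have Hcong: "Hh x = Hh x'" if "\<And>r. r < M \<Longrightarrow> x r = x' r" for x x'
  proof -
    have "(\<lambda>p\<in>{..<M}. \<Sum>q<M. U p q * x q) = (\<lambda>p\<in>{..<M}. \<Sum>q<M. U p q * x' q)"
      using that by (intro restrict_ext sum.cong) auto
    then show ?thesis by (simp add: Hh_def h0U_def)
  qed
  define \<Psi> where "\<Psi> z = Hh (\<lambda>r. a r + d r * z r)" for z
  have \<Psi>m: "\<Psi> \<in> borel_measurable (GI {..<M+N})"
  proof -
    have eq: "\<Psi> = (\<lambda>z. ennreal (h0 (restrict (\<lambda>p. (\<Sum>q<M. U p q * a q) + (\<Sum>q<M. (U p q * d q) * z q)) {..<M})))"
      unfolding \<Psi>_def Hh_def h0U_def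
      by (intro ext arg_cong[where f="\<lambda>x. ennreal (h0 x)"] restrict_ext)
         (simp add: distrib_left sum.distrib mult.assoc)
    have "(\<lambda>z. restrict (\<lambda>p. (\<Sum>q<M. U p q * a q) + (\<Sum>q<M. (U p q * d q) * z q)) {..<M}) \<in> measurable (PiM {..<M+N} (\<lambda>_. lborel)) (PiM {..<M} (\<lambda>_. lborel))"
      by (rule meas_restr_affine) simp
    then have "\<Psi> \<in> borel_measurable (PiM {..<M+N} (\<lambda>_. lborel))"
      unfolding eq by measurable
    then show ?thesis by (simp cong: measurable_cong_sets add: sets_GI)
  qed
  have LHSm: "(\<lambda>w. h0 (restrict (\<lambda>p. (\<Sum>q<M. A p q * v q) + (\<Sum>t<N. B p t * w t)) {..<M})) \<in> borel_measurable (PiM {..<N} (\<lambda>_. lborel))"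
  proof -
    have "(\<lambda>w. restrict (\<lambda>p. (\<Sum>q<M. A p q * v q) + (\<Sum>t<N. B p t * w t)) {..<M}) \<in> measurable (PiM {..<N} (\<lambda>_. lborel)) (PiM {..<M} (\<lambda>_. lborel))"
      by (rule meas_restr_affine) simp
    then show ?thesis by measurable
  qed
  have LHS1: "(\<integral>\<^sup>+w. ennreal (h0 (restrict (\<lambda>p. (\<Sum>q<M. A p q * v q) + (\<Sum>t<N. B p t * w t)) {..<M})
              * exp (- pi * (\<Sum>i<N. (w i)\<^sup>2))) \<partial>PiM {..<N} (\<lambda>_. lborel))
      = (\<integral>\<^sup>+w. Hh (\<lambda>r. a r + (\<Sum>t<N. T r t * w t)) \<partial>GI {..<N})"
  proof -
    have "(\<integral>\<^sup>+w. ennreal (h0 (restrict (\<lambda>p. (\<Sum>q<M. A p q * v q) + (\<Sum>t<N. B p t * w t)) {..<M})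
              * exp (- pi * (\<Sum>i<N. (w i)\<^sup>2))) \<partial>PiM {..<N} (\<lambda>_. lborel))
      = (\<integral>\<^sup>+w. ennreal (h0 (restrict (\<lambda>p. (\<Sum>q<M. A p q * v q) + (\<Sum>t<N. B p t * w t)) {..<M})) \<partial>GI {..<N})"
      by (rule nn_integral_GI[OF _ LHSm h0_nonneg]) simp
    also have "\<dots> = (\<integral>\<^sup>+w. Hh (\<lambda>r. a r + (\<Sum>t<N. T r t * w t)) \<partial>GI {..<N})"
    proof (rule nn_integral_cong)
      fix w
      have "restrict (\<lambda>p. (\<Sum>q<M. A p q * v q) + (\<Sum>t<N. B p t * w t)) {..<M}
          = restrict (\<lambda>p. \<Sum>q<M. U p q * (a q + (\<Sum>t<N. T q t * w t))) {..<M}"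
      proof (rule restrict_ext)
        fix p assume "p \<in> {..<M}"
        then have p: "p < M" by simp
        have "(\<Sum>q<M. U p q * (a q + (\<Sum>t<N. T q t * w t))) = (\<Sum>q<M. U p q * a q) + (\<Sum>q<M. U p q * (\<Sum>t<N. T q t * w t))"
          by (simp add: distrib_left sum.distrib)
        also have "(\<Sum>q<M. U p q * a q) = (\<Sum>q<M. A p q * v q)"
          unfolding a_def by (rule E1[OF svd p, symmetric])
        also have "(\<Sum>q<M. U p q * (\<Sum>t<N. T q t * w t)) = (\<Sum>t<N. B p t * w t)"
          unfolding T_def by (rule E2[OF U2 p])
        finally show "(\<Sum>q<M. A p q * v q) + (\<Sum>t<N. B p t * w t) = (\<Sum>q<M. U p q * (a q + (\<Sum>t<N. T q t * w t)))" ..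
      qed
      then show "ennreal (h0 (restrict (\<lambda>p. (\<Sum>q<M. A p q * v q) + (\<Sum>t<N. B p t * w t)) {..<M})) = Hh (\<lambda>r. a r + (\<Sum>t<N. T r t * w t))"
        by (simp add: Hh_def h0U_def)
    qed
    finally show ?thesis .
  qed
  have RHS1: "(\<integral>\<^sup>+w. ennreal (h0U M h0 U (\<lambda>r. gam r * (\<Sum>q<M. V q r * v q) + sqrt (1 - (gam r)\<^sup>2) * w r)
              * exp (- pi * (\<Sum>i<M. (w i)\<^sup>2))) \<partial>PiM {..<M} (\<lambda>_. lborel))
      = (\<integral>\<^sup>+w. Hh (\<lambda>r. a r + d r * w r) \<partial>GI {..<M})"
  proof -
    have m: "(\<lambda>w. h0U M h0 U (\<lambda>r. a r + d r * w r)) \<in> borel_measurable (PiM {..<M} (\<lambda>_. lborel))"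
    proof -
      have eq: "(\<lambda>w. h0U M h0 U (\<lambda>r. a r + d r * w r)) = (\<lambda>z. h0 (restrict (\<lambda>p. (\<Sum>q<M. U p q * a q) + (\<Sum>q<M. (U p q * d q) * z q)) {..<M}))"
        unfolding h0U_def
        by (intro ext arg_cong[where f="\<lambda>x. h0 x"] restrict_ext)
           (simp add: distrib_left sum.distrib mult.assoc)
      have "(\<lambda>z. restrict (\<lambda>p. (\<Sum>q<M. U p q * a q) + (\<Sum>q<M. (U p q * d q) * z q)) {..<M}) \<in> measurable (PiM {..<M} (\<lambda>_. lborel)) (PiM {..<M} (\<lambda>_. lborel))"
        by (rule meas_restr_affine) simp
      then show ?thesis unfolding eq by measurable
    qed
    have "(\<integral>\<^sup>+w. ennreal (h0U M h0 U (\<lambda>r. a r + d r * w r) * exp (- pi * (\<Sum>i<M. (w i)\<^sup>2))) \<partial>PiM {..<M} (\<lambda>_. lborel))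
        = (\<integral>\<^sup>+w. ennreal (h0U M h0 U (\<lambda>r. a r + d r * w r)) \<partial>GI {..<M})"
      by (rule nn_integral_GI[OF _ m]) (simp_all add: h0U_def h0_nonneg)
    then show ?thesis by (simp add: a_def d_def Hh_def)
  qed
  have sp1: "emeasure (GI I) (space (GI I)) = 1" for I
    using prob_space.emeasure_space_1[OF prob_space_GI] .
  have A: "(\<integral>\<^sup>+z. \<Psi> z \<partial>GI {..<M+N}) = (\<integral>\<^sup>+y. Hh (\<lambda>r. a r + d r * y r) \<partial>GI {..<M})"
  proof -
    have "(\<integral>\<^sup>+z. \<Psi> z \<partial>GI {..<M+N}) = (\<integral>\<^sup>+y. \<integral>\<^sup>+w. \<Psi> (join_vw M y w) \<partial>GI {..<N} \<partial>GI {..<M})"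
      by (rule GI_split[OF \<Psi>m])
    also have "\<dots> = (\<integral>\<^sup>+y. \<integral>\<^sup>+w. Hh (\<lambda>r. a r + d r * y r) \<partial>GI {..<N} \<partial>GI {..<M})"
      unfolding \<Psi>_def by (intro nn_integral_cong Hcong) (simp add: join_vw_def)
    also have "\<dots> = (\<integral>\<^sup>+y. Hh (\<lambda>r. a r + d r * y r) \<partial>GI {..<M})"
      by (simp add: sp1)
    finally show ?thesis .
  qed
  have B: "(\<integral>\<^sup>+z. \<Psi> (lin {..<M+N} Qm z) \<partial>GI {..<M+N}) = (\<integral>\<^sup>+w. Hh (\<lambda>r. a r + (\<Sum>t<N. T r t * w t)) \<partial>GI {..<N})"
  proof -
    have m: "(\<lambda>z. \<Psi> (lin {..<M+N} Qm z)) \<in> borel_measurable (GI {..<M+N})"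
      using measurable_comp[OF lin_measurable \<Psi>m] by (simp add: comp_def)
    have "(\<integral>\<^sup>+z. \<Psi> (lin {..<M+N} Qm z) \<partial>GI {..<M+N})
        = (\<integral>\<^sup>+y. \<integral>\<^sup>+w. \<Psi> (lin {..<M+N} Qm (join_vw M y w)) \<partial>GI {..<N} \<partial>GI {..<M})"
      by (rule GI_split[OF m])
    also have "\<dots> = (\<integral>\<^sup>+y. \<integral>\<^sup>+w. Hh (\<lambda>r. a r + (\<Sum>t<N. T r t * w t)) \<partial>GI {..<N} \<partial>GI {..<M})"
    proof (intro nn_integral_cong)
      fix y w
      show "\<Psi> (lin {..<M+N} Qm (join_vw M y w)) = Hh (\<lambda>r. a r + (\<Sum>t<N. T r t * w t))"
        unfolding \<Psi>_def
      proof (rule Hcong)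
        fix r assume r: "r < M"
        have "d r * lin {..<M+N} Qm (join_vw M y w) r = d r * (1 - Pv r) * y r + (\<Sum>t<N. (d r * Z r t) * w t)"
          unfolding act[OF r] by (simp add: distrib_left sum_distrib_left mult.assoc)
        also have "\<dots> = (\<Sum>t<N. T r t * w t)"
          using r by (simp add: dPv dZ)
        finally show "a r + d r * lin {..<M+N} Qm (join_vw M y w) r = a r + (\<Sum>t<N. T r t * w t)" by simp
      qed
    qed
    also have "\<dots> = (\<integral>\<^sup>+w. Hh (\<lambda>r. a r + (\<Sum>t<N. T r t * w t)) \<partial>GI {..<N})"
      by (simp add: sp1)
    finally show ?thesis .
  qed
  have C: "(\<integral>\<^sup>+z. \<Psi> (lin {..<M+N} Qm z) \<partial>GI {..<M+N}) = (\<integral>\<^sup>+z. \<Psi> z \<partial>GI {..<M+N})"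
    using ginvQ \<Psi>m unfolding ginv_def by blast
  show ?thesis unfolding LHS1 RHS1 using A B C by simp
qed

theorem theorem3p2:
  fixes M N k :: nat and lS lR mu :: real and rho :: "real \<Rightarrow> real"
    and h0 :: "(nat \<Rightarrow> real) \<Rightarrow> real" and v :: "nat \<Rightarrow> real"
    and U V :: "(nat \<times> nat) list \<Rightarrow> (nat \<Rightarrow> real) \<Rightarrow> nat \<Rightarrow> nat \<Rightarrow> real"
    and gam :: "(nat \<times> nat) list \<Rightarrow> (nat \<Rightarrow> real) \<Rightarrow> nat \<Rightarrow> real"
  assumes "0 < M" "0 < N" "0 < lS" "0 < lR" "0 < mu"
    and rho_meas: "rho \<in> borel_measurable lborel"
    and rho_nonneg: "\<And>x. x \<in> {-pi..pi} \<Longrightarrow> 0 \<le> rho x"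
    and rho_int: "(\<integral>\<^sup>+ x. ennreal (indicator {-pi..pi} x * rho x) \<partial>lborel) = 1"
    and h0_meas: "h0 \<in> borel_measurable (PiM {..<M} (\<lambda>_. lborel))"
    and h0_nonneg: "\<And>x. 0 \<le> h0 x"
    and h0_int: "(\<integral>\<^sup>+ x. ennreal (h0 x * exp (- pi * (\<Sum>i<M. (x i)\<^sup>2))) \<partial>(PiM {..<M} (\<lambda>_. lborel))) = 1"
    and U_orth: "\<And>as th p q. as \<in> seqs M N k \<Longrightarrow> p < M \<Longrightarrow> q < M \<Longrightarrow>
        (\<Sum>r<M. U as th r p * U as th r q) = (if p = q then 1 else 0)"
    and V_orth: "\<And>as th p q. as \<in> seqs M N k \<Longrightarrow> p < M \<Longrightarrow> q < M \<Longrightarrow>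
        (\<Sum>r<M. V as th r p * V as th r q) = (if p = q then 1 else 0)"
    and gam_range: "\<And>as th j. as \<in> seqs M N k \<Longrightarrow> j < M \<Longrightarrow> 0 \<le> gam as th j \<and> gam as th j \<le> 1"
    and svd: "\<And>as th p q. as \<in> seqs M N k \<Longrightarrow> p < M \<Longrightarrow> q < M \<Longrightarrow>
        A_blk as th p q = (\<Sum>r<M. U as th p r * gam as th r * V as th q r)"
  shows "hk M N lS lR mu rho h0 k v =
    (\<Sum>as\<in>seqs M N k.
       ennreal (\<Prod>l<k. lam M N lS lR mu (as ! l)) *
       (\<integral>\<^sup>+ th. ennreal (\<Prod>l<k. indicator {-pi..pi} (th l) * rho (th l)) *
          (\<integral>\<^sup>+ w. ennreal (h0U M h0 (U as th)
                    (\<lambda>r. gam as th r * (\<Sum>q<M. V as th q r * v q)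
                         + sqrt (1 - (gam as th r)\<^sup>2) * w r)
                  * exp (- pi * (\<Sum>i<M. (w i)\<^sup>2)))
            \<partial>(PiM {..<M} (\<lambda>_. lborel)))
        \<partial>(PiM {..<k} (\<lambda>_. lborel))))"
  unfolding hk_def
proof (intro sum.cong refl arg_cong2[where f="(*)"] nn_integral_cong)
  fix as th assume as: "as \<in> seqs M N k"
  have sub: "set as \<subseteq> pairs M N" using as by (simp add: seqs_def)
  have eq: "restrict (comp_rot_inv as th (join_vw M v w)) {..<M}
      = restrict (\<lambda>p. (\<Sum>q<M. A_blk as th p q * v q) + (\<Sum>t<N. Pm as th p (M + t) * w t)) {..<M}" for w
    by (intro restrict_ext cri_join[OF sub]) simp
  show "(\<integral>\<^sup>+ w. ennreal (h0 (restrict (comp_rot_inv as th (join_vw M v w)) {..<M}) * exp (- pi * (\<Sum>i<N. (w i)\<^sup>2)))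
            \<partial>(PiM {..<N} (\<lambda>_. lborel)))
      = (\<integral>\<^sup>+ w. ennreal (h0U M h0 (U as th)
                    (\<lambda>r. gam as th r * (\<Sum>q<M. V as th q r * v q)
                         + sqrt (1 - (gam as th r)\<^sup>2) * w r)
                  * exp (- pi * (\<Sum>i<M. (w i)\<^sup>2)))
            \<partial>(PiM {..<M} (\<lambda>_. lborel)))"
    unfolding eq
  proof (rule inner_eq[OF h0_meas h0_nonneg])
    show "\<And>p q. p < M \<Longrightarrow> q < M \<Longrightarrow> (\<Sum>r<M. U as th r p * U as th r q) = (if p = q then 1 else 0)"
      using U_orth[OF as] .
    show "\<And>p q. p < M \<Longrightarrow> q < M \<Longrightarrow> (\<Sum>r<M. V as th r p * V as th r q) = (if p = q then 1 else 0)"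
      using V_orth[OF as] .
    show "\<And>j. j < M \<Longrightarrow> 0 \<le> gam as th j \<and> gam as th j \<le> 1" using gam_range[OF as] .
    show "\<And>p q. p < M \<Longrightarrow> q < M \<Longrightarrow> A_blk as th p q = (\<Sum>r<M. U as th p r * gam as th r * V as th q r)"
      using svd[OF as] .
    show "\<And>p p'. p < M \<Longrightarrow> p' < M \<Longrightarrow> (\<Sum>q<M. A_blk as th p q * A_blk as th p' q) + (\<Sum>t<N. Pm as th p (M + t) * Pm as th p' (M + t)) = (if p = p' then 1 else 0)"
      using block_rows[OF sub] .
  qed
qed

end
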